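(* Let $\Gamma=\{\emptyset,A,B,C\}\subseteq\mathbb F_2^\Omega$ be a balanced lift of a commuting four group in the Golay co-code (so $|A|=|B|=|C|=4$ have co-weight $4$, $\bar A+\bar B=\bar C$, and the sextets of $\bar A,\bar B,\bar C$ pairwise commute). Let $\sigma(A,B)\in\{\pm1\}$ be defined by $e_Ae_B1_G=\sigma(A,B)e_C1_G$, and let $\mu:\Gamma\to\{\pm1\}$ be a homomorphism (i.e. $\mu(\emptyset)=1$, $\mu(C)=\mu(A)\mu(B)$). Then $$s=\tfrac12\big(1+\mu(A)e_A+\mu(B)e_B-\sigma(A,B)\mu(C)e_C\big)1_G$$ lies in the $\mathrm{Spin}(\mathfrak l)$-orbit of $1_G$.
   Context: $\Omega$: ordered $24$-set; $\mathcal G$: copy of the extended Golay code on $\Omega$; $\mathcal G^*=\mathbb F_2^\Omega/\mathcal G$ the co-code; co-weight $w^*(X)$ = minimal weight in $X+\mathcal G$. Each co-code element of co-weight $4$ has exactly six weight-$4$ lifts, forming a partition of $\Omega$ into tetrads (a sextet). Two such sextets commute if every tetrad of one meets every tetrad of the other in an even number of points. A balanced lift of $\bar\Delta\subseteq\mathcal G^*$ is $\Delta\subseteq\mathbb F_2^\Omega$ mapping bijectively to $\bar\Delta$ with $w(X)=w^*(X)$; a group law on $\Gamma$ is given by $X\dotplus Y=Z$ iff $X+Y+Z\in\mathcal G$. $\mathfrak l$: $24$-dimensional Euclidean space with orthonormal basis $\{e_i\}_{i\in\Omega}$; $\mathrm{Cl}(\mathfrak l)$ with $uv+vu=-2\langle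 u,v\rangle$; $e_X=e_{x_1}\cdots e_{x_k}$ ($x_1<\dots<x_k$); $G\subset\mathrm{Spin}(\mathfrak l)$ a subgroup with exactly one element $\pm e_D$ per $D\in\mathcal G$, $-1\notin G$, $e_\Omega\in G$; $\mathrm{Cm}(\mathfrak l)_G=\mathrm{Cl}(\mathfrak l)\otimes_{\mathbb RG}\mathbb R_1$, $1_G=1\otimes1$, with $\mathrm{Spin}(\mathfrak l)$ acting by left multiplication. *)

theory Defs
  imports Complex_Main
begin

definition Omega :: "nat set" where "Omega = {..<24}"

text \<open>Elements of F_2^Omega are subsets of Omega; addition is symmetric difference.\<close>
definition symdiff :: "nat set \<Rightarrow> nat set \<Rightarrow> nat set" where
  "symdiff X Y = (X - Y) \<union> (Y - X)"

text \<open>Standard extended Golay code: the extended quadratic residue code of length 24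
  (coordinates 0..22 = Z/23, coordinate 23 = infinity), spanned by the following 12 words
  (it is a [24,12,8] code).\<close>
definition golay_gens :: "nat set list" where
  "golay_gens =
    [{1, 2, 3, 4, 6, 8, 9, 12, 13, 16, 18, 23},
     {2, 3, 4, 5, 7, 9, 10, 13, 14, 17, 19, 23},
     {3, 4, 5, 6, 8, 10, 11, 14, 15, 18, 20, 23},
     {4, 5, 6, 7, 9, 11, 12, 15, 16, 19, 21, 23},
     {5, 6, 7, 8, 10, 12, 13, 16, 17, 20, 22, 23},
     {0, 6, 7, 8, 9, 11, 13, 14, 17, 18, 21, 23},
     {1, 7, 8, 9, 10, 12, 14, 15, 18, 19, 22, 23},
     {0, 2, 8, 9, 10, 11, 13, 15, 16, 19, 20, 23},
     {1, 3, 9, 10, 11, 12, 14, 16, 17, 20, 21, 23},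
     {2, 4, 10, 11, 12, 13, 15, 17, 18, 21, 22, 23},
     {0, 3, 5, 11, 12, 13, 14, 16, 18, 19, 22, 23},
     {0, 1, 4, 6, 12, 13, 14, 15, 17, 19, 20, 23}]"

definition golay_std :: "nat set set" where
  "golay_std = {foldr symdiff (nths golay_gens I) {} | I. I \<subseteq> {..<12}}"

definition golay_copy :: "nat set set \<Rightarrow> bool" where
  "golay_copy Gc \<longleftrightarrow> (\<exists>\<pi>. bij_betw \<pi> Omega Omega \<and> Gc = (\<lambda>D. \<pi> ` D) ` golay_std)"

definition coweight :: "nat set set \<Rightarrow> nat set \<Rightarrow> nat" where
  "coweight Gc X = Min ((\<lambda>D. card (symdiff X D)) ` Gc)"

definition sextet :: "nat set set \<Rightarrow> nat set \<Rightarrow> nat set set" where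
  "sextet Gc X = {T. T \<subseteq> Omega \<and> card T = 4 \<and> symdiff T X \<in> Gc}"

definition sextets_commute :: "nat set set \<Rightarrow> nat set \<Rightarrow> nat set \<Rightarrow> bool" where
  "sextets_commute Gc X Y \<longleftrightarrow>
     (\<forall>T \<in> sextet Gc X. \<forall>T' \<in> sextet Gc Y. even (card (T \<inter> T')))"

text \<open>Gamma = {{}, A, B, C} is a balanced lift of a commuting four group of the co-code:
  A, B, C are lifts with weight equal to co-weight 4, their classes together with 0 form a
  Klein four subgroup (A-bar, B-bar nonzero and distinct, A-bar + B-bar = C-bar), and the
  sextets pairwise commute.\<close>
definition balanced_commuting_four_group ::
  "nat set set \<Rightarrow> nat set \<Rightarrow> nat set \<Rightarrow> nat set \<Rightarrow> bool" where
  "balanced_commuting_four_group Gc A B C \<longleftrightarrow>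
     A \<subseteq> Omega \<and> B \<subseteq> Omega \<and> C \<subseteq> Omega \<and>
     card A = 4 \<and> card B = 4 \<and> card C = 4 \<and>
     coweight Gc A = 4 \<and> coweight Gc B = 4 \<and> coweight Gc C = 4 \<and>
     symdiff A B \<notin> Gc \<and>
     symdiff (symdiff A B) C \<in> Gc \<and>
     sextets_commute Gc A B \<and> sextets_commute Gc A C \<and> sextets_commute Gc B C"

text \<open>An element of Cl(l) is represented by its coordinates w.r.t. the basis e_X, X \<subseteq> Omega
  (coordinates at sets not contained in Omega are zero).\<close>
type_synonym cl = "nat set \<Rightarrow> real"

definition cl_carrier :: "cl set" where
  "cl_carrier = {f. \<forall>X. \<not> X \<subseteq> Omega \<longrightarrow> f X = 0}"

text \<open>e_X e_Y = sign * e_(X+Y), with e_i e_j = - e_j e_i (i \<noteq> j) and e_i e_i = -1,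
  i.e. uv + vu = -2<u,v>.\<close>
definition cl_sign :: "nat set \<Rightarrow> nat set \<Rightarrow> real" where
  "cl_sign X Y = (-1) ^ (card {(x, y). x \<in> X \<and> y \<in> Y \<and> y < x} + card (X \<inter> Y))"

definition cl_mul :: "cl \<Rightarrow> cl \<Rightarrow> cl" where
  "cl_mul f g = (\<lambda>Z. \<Sum>X\<in>Pow Omega. \<Sum>Y\<in>Pow Omega.
      if symdiff X Y = Z then cl_sign X Y * f X * g Y else 0)"

definition cl_add :: "cl \<Rightarrow> cl \<Rightarrow> cl" where "cl_add f g = (\<lambda>Z. f Z + g Z)"
definition cl_smul :: "real \<Rightarrow> cl \<Rightarrow> cl" where "cl_smul c f = (\<lambda>Z. c * f Z)"
definition cl_neg :: "cl \<Rightarrow> cl" where "cl_neg f = (\<lambda>Z. - f Z)"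
definition cl_zero :: cl where "cl_zero = (\<lambda>Z. 0)"

text \<open>Basis element e_X (= e_x1 ... e_xk, x1 < ... < xk); e_{} = 1.\<close>
definition cl_e :: "nat set \<Rightarrow> cl" where "cl_e X = (\<lambda>Z. if Z = X then 1 else 0)"

definition cl_one :: cl where "cl_one = cl_e {}"

definition cl_vec :: "(nat \<Rightarrow> real) \<Rightarrow> cl" where
  "cl_vec v = (\<lambda>Z. if Z \<subseteq> Omega \<and> card Z = 1 then v (the_elem Z) else 0)"

definition unit_vecs :: "cl set" where
  "unit_vecs = {cl_vec v | v. (\<Sum>i\<in>Omega. (v i)\<^sup>2) = 1}"

definition Spin :: "cl set" where
  "Spin = {foldr cl_mul us cl_one | us. even (length us) \<and> set us \<subseteq> unit_vecs}"

definition good_G :: "nat set set \<Rightarrow> cl set \<Rightarrow> bool" where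
  "good_G Gc G \<longleftrightarrow>
     G \<subseteq> Spin \<and> cl_one \<in> G \<and>
     (\<forall>a\<in>G. \<forall>b\<in>G. cl_mul a b \<in> G) \<and>
     (\<forall>a\<in>G. \<exists>b\<in>G. cl_mul a b = cl_one) \<and>
     (\<forall>x\<in>G. \<exists>D\<in>Gc. x = cl_e D \<or> x = cl_neg (cl_e D)) \<and>
     (\<forall>D\<in>Gc. (cl_e D \<in> G) \<noteq> (cl_neg (cl_e D) \<in> G)) \<and>
     cl_neg cl_one \<notin> G \<and> cl_e Omega \<in> G"

text \<open>Kernel of Cl(l) \<rightarrow> Cm(l)_G, x \<mapsto> x 1_G: the real span of {x g - x},
  which is already closed under addition/scaling as a set of finite sums.\<close>
inductive_set cm_kernel :: "cl set \<Rightarrow> cl set" for G :: "cl set" where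
  zero: "cl_zero \<in> cm_kernel G"
| step: "\<lbrakk>x \<in> cl_carrier; g \<in> G; n \<in> cm_kernel G\<rbrakk>
           \<Longrightarrow> cl_add (cl_add (cl_mul x g) (cl_neg x)) n \<in> cm_kernel G"

text \<open>x 1_G = y 1_G in Cm(l)_G.\<close>
definition cm_eq :: "cl set \<Rightarrow> cl \<Rightarrow> cl \<Rightarrow> bool" where
  "cm_eq G x y \<longleftrightarrow> cl_add x (cl_neg y) \<in> cm_kernel G"

definition in_spin_orbit :: "cl set \<Rightarrow> cl \<Rightarrow> bool" where
  "in_spin_orbit G x \<longleftrightarrow> (\<exists>g\<in>Spin. cm_eq G (cl_mul g cl_one) x)"

end

theory Submission
  imports Defs
begin


lemma symdiff_comm: "symdiff X Y = symdiff Y X" by (auto simp: symdiff_def)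
lemma symdiff_assoc: "symdiff (symdiff X Y) Z = symdiff X (symdiff Y Z)" by (auto simp: symdiff_def)
lemma symdiff_left_comm: "symdiff X (symdiff Y Z) = symdiff Y (symdiff X Z)" by (auto simp: symdiff_def)
lemma symdiff_self[simp]: "symdiff X X = {}" by (auto simp: symdiff_def)
lemma symdiff_empty[simp]: "symdiff X {} = X" "symdiff {} X = X" by (auto simp: symdiff_def)
lemma symdiff_cancel[simp]: "symdiff X (symdiff X Y) = Y" by (auto simp: symdiff_def)
lemma symdiff_eq_iff: "(symdiff X Y = Z) = (Y = symdiff X Z)" by (auto simp: symdiff_def)
lemma symdiff_sub: "X \<subseteq> Omega \<Longrightarrow> (symdiff X Z \<subseteq> Omega) = (Z \<subseteq> Omega)" by (auto simp: symdiff_def)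
lemma symdiff_subI: "X \<subseteq> Omega \<Longrightarrow> Z \<subseteq> Omega \<Longrightarrow> symdiff X Z \<subseteq> Omega" by (auto simp: symdiff_def)
lemma finite_Omega[simp]: "finite Omega" by (simp add: Omega_def)
lemma finite_sub_Omega: "X \<subseteq> Omega \<Longrightarrow> finite X" using finite_subset finite_Omega by blast

section \<open>signs\<close>

definition hh :: "nat \<Rightarrow> nat \<Rightarrow> real" where
  "hh x y = (if y < x then -1 else 1) * (if x = y then -1 else 1)"

lemma hh_sq: "hh x y * hh x y = 1" by (simp add: hh_def)

lemma prod_pm1_sq: "(\<And>x. f x * f x = (1::real)) \<Longrightarrow> prod f A * prod f A = 1"
  by (simp add: prod.distrib[symmetric])

lemma prod_symdiff:
  fixes f :: "nat \<Rightarrow> real"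
  assumes "finite X" "finite Y" "\<And>x. f x * f x = 1"
  shows "prod f (symdiff X Y) = prod f X * prod f Y"
proof -
  have d: "symdiff X Y = (X - Y) \<union> (Y - X)" by (simp add: symdiff_def)
  have 1: "prod f (symdiff X Y) = prod f (X - Y) * prod f (Y - X)"
    unfolding d by (rule prod.union_disjoint) (use assms in auto)
  have e1: "X - X \<inter> Y = X - Y" "Y - X \<inter> Y = Y - X" by blast+
  have 2: "prod f X = prod f (X - Y) * prod f (X \<inter> Y)"
  proof -
    have "prod f X = prod f (X - X \<inter> Y) * prod f (X \<inter> Y)" by (rule prod.subset_diff) (use assms in auto)
    thus ?thesis by (simp only: e1)
  qed
  have 3: "prod f Y = prod f (Y - X) * prod f (X \<inter> Y)"
  proof -
    have "prod f Y = prod f (Y - X \<inter> Y) * prod f (X \<inter> Y)" by (rule prod.subset_diff) (use assms in auto)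
    thus ?thesis by (simp only: e1)
  qed
  have 4: "prod f (X \<inter> Y) * prod f (X \<inter> Y) = 1" by (rule prod_pm1_sq) (rule assms(3))
  show ?thesis unfolding 1 2 3 using 4 by (simp add: algebra_simps)
qed

lemma cl_sign_prod:
  assumes "finite X" "finite Y"
  shows "cl_sign X Y = (\<Prod>x\<in>X. \<Prod>y\<in>Y. hh x y)"
proof -
  have a: "(\<Prod>x\<in>X. \<Prod>y\<in>Y. hh x y) = (\<Prod>p\<in>X\<times>Y. hh (fst p) (snd p))"
    by (simp add: prod.cartesian_product case_prod_beta)
  also have "\<dots> = (\<Prod>p\<in>X\<times>Y. (if snd p < fst p then -1 else 1)) * (\<Prod>p\<in>X\<times>Y. (if fst p = snd p then -1 else 1))"
    by (simp add: hh_def prod.distrib)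
  also have "(\<Prod>p\<in>X\<times>Y. (if snd p < fst p then -1 else 1)) = ((-1::real) ^ card {(x, y). x \<in> X \<and> y \<in> Y \<and> y < x})"
  proof -
    have "(\<Prod>p\<in>X\<times>Y. (if snd p < fst p then -1 else 1::real)) = (\<Prod>p\<in>(X\<times>Y) \<inter> {p. snd p < fst p}. -1) * (\<Prod>p\<in>(X\<times>Y) \<inter> - {p. snd p < fst p}. 1)"
      by (rule prod.If_cases) (use assms in auto)
    moreover have "(X\<times>Y) \<inter> {p. snd p < fst p} = {(x, y). x \<in> X \<and> y \<in> Y \<and> y < x}" by auto
    ultimately show ?thesis by simp
  qed
  also have "(\<Prod>p\<in>X\<times>Y. (if fst p = snd p then -1 else 1)) = ((-1::real) ^ card (X \<inter> Y))"
  proof -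
    have "(\<Prod>p\<in>X\<times>Y. (if fst p = snd p then -1 else 1::real)) = (\<Prod>p\<in>(X\<times>Y) \<inter> {p. fst p = snd p}. -1) * (\<Prod>p\<in>(X\<times>Y) \<inter> - {p. fst p = snd p}. 1)"
      by (rule prod.If_cases) (use assms in auto)
    moreover have "card ((X\<times>Y) \<inter> {p. fst p = snd p}) = card (X \<inter> Y)"
    proof -
      have "(X\<times>Y) \<inter> {p. fst p = snd p} = (\<lambda>x. (x, x)) ` (X \<inter> Y)" by auto
      moreover have "inj_on (\<lambda>x. (x, x)) (X \<inter> Y)" by (auto simp: inj_on_def)
      ultimately show ?thesis by (simp add: card_image)
    qed
    ultimately show ?thesis by simp
  qed
  finally show ?thesis by (simp add: cl_sign_def power_add)
qed

lemma neg1_pow: "(-1::real)^n = 1 \<or> (-1::real)^n = -1"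
  by (cases "even n") (simp_all add: neg_one_even_power neg_one_odd_power)

lemma cl_sign_pm: "cl_sign X Y = 1 \<or> cl_sign X Y = -1"
  unfolding cl_sign_def by (rule neg1_pow)

lemma cl_sign_sq: "cl_sign X Y * cl_sign X Y = 1"
  using cl_sign_pm[of X Y] by auto

lemma cl_sign_symdiff_left:
  assumes "finite X" "finite Y" "finite Z"
  shows "cl_sign (symdiff X Y) Z = cl_sign X Z * cl_sign Y Z"
proof -
  have fs: "finite (symdiff X Y)" using assms by (simp add: symdiff_def)
  show ?thesis
    unfolding cl_sign_prod[OF fs assms(3)] cl_sign_prod[OF assms(1,3)] cl_sign_prod[OF assms(2,3)]
    by (rule prod_symdiff) (use assms in \<open>auto intro: prod_pm1_sq hh_sq\<close>)
qed

lemma cl_sign_symdiff_right: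
  assumes "finite X" "finite Y" "finite Z"
  shows "cl_sign X (symdiff Y Z) = cl_sign X Y * cl_sign X Z"
proof -
  have fs: "finite (symdiff Y Z)" using assms by (simp add: symdiff_def)
  show ?thesis
    unfolding cl_sign_prod[OF assms(1) fs] cl_sign_prod[OF assms(1,2)] cl_sign_prod[OF assms(1,3)]
    by (simp add: prod_symdiff[OF assms(2,3)] hh_sq prod.distrib)
qed

lemma cl_sign_cocycle:
  assumes "finite X" "finite Y" "finite Z"
  shows "cl_sign X Y * cl_sign (symdiff X Y) Z = cl_sign X (symdiff Y Z) * cl_sign Y Z"
  by (simp add: cl_sign_symdiff_left cl_sign_symdiff_right assms)

lemma cl_sign_empty[simp]: "cl_sign {} Y = 1" "cl_sign X {} = 1"
  by (simp_all add: cl_sign_def)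

lemma cl_sign_single: "cl_sign {i} {j} = hh i j"
  by (simp add: cl_sign_prod)

lemma cl_sign_single_self: "cl_sign {i} {i} = -1"
  by (simp add: cl_sign_single hh_def)

lemma cl_sign_single_swap: "i \<noteq> j \<Longrightarrow> cl_sign {i} {j} * cl_sign {j} {i} = -1"
  by (cases "i < j") (auto simp: cl_sign_single hh_def)

lemma cl_sign_swap_disj:
  assumes "finite X" "finite Y" "X \<inter> Y = {}"
  shows "cl_sign X Y * cl_sign Y X = (-1) ^ (card X * card Y)"
proof -
  have "cl_sign X Y * cl_sign Y X = (\<Prod>x\<in>X. \<Prod>y\<in>Y. hh x y * hh y x)"
    unfolding cl_sign_prod[OF assms(1,2)] cl_sign_prod[OF assms(2,1)]
  proof -
    have "(\<Prod>y\<in>Y. \<Prod>x\<in>X. hh y x) = (\<Prod>x\<in>X. \<Prod>y\<in>Y. hh y x)" by (rule prod.swap)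
    thus "(\<Prod>x\<in>X. \<Prod>y\<in>Y. hh x y) * (\<Prod>y\<in>Y. \<Prod>x\<in>X. hh y x) = (\<Prod>x\<in>X. \<Prod>y\<in>Y. hh x y * hh y x)"
      by (simp add: prod.distrib)
  qed
  also have "\<dots> = (\<Prod>x\<in>X. \<Prod>y\<in>Y. -1)"
    by (rule prod.cong[OF refl], rule prod.cong[OF refl]) (use assms in \<open>auto simp: hh_def\<close>)
  finally show ?thesis by (simp add: power_mult[symmetric] mult.commute)
qed


lemma cl_mul_alt: "cl_mul f g Z = (if Z \<subseteq> Omega then (\<Sum>X\<in>Pow Omega. cl_sign X (symdiff X Z) * f X * g (symdiff X Z)) else 0)"
proof -
  have "cl_mul f g Z = (\<Sum>X\<in>Pow Omega. (if Z \<subseteq> Omega then cl_sign X (symdiff X Z) * f X * g (symdiff X Z) else 0))"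
    unfolding cl_mul_def
  proof (rule sum.cong[OF refl])
    fix X assume X: "X \<in> Pow Omega"
    have "(\<Sum>Y\<in>Pow Omega. if symdiff X Y = Z then cl_sign X Y * f X * g Y else 0)
        = (\<Sum>Y\<in>Pow Omega. if Y = symdiff X Z then cl_sign X Y * f X * g Y else 0)"
      by (rule sum.cong[OF refl]) (simp add: symdiff_eq_iff)
    also have "\<dots> = (if symdiff X Z \<in> Pow Omega then cl_sign X (symdiff X Z) * f X * g (symdiff X Z) else 0)"
      by simp
    finally show "(\<Sum>Y\<in>Pow Omega. if symdiff X Y = Z then cl_sign X Y * f X * g Y else 0) =
      (if Z \<subseteq> Omega then cl_sign X (symdiff X Z) * f X * g (symdiff X Z) else 0)"
      using X by (simp add: symdiff_sub)
  qed
  then show ?thesis by auto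
qed

lemma cl_mul_carrier[simp]: "cl_mul f g \<in> cl_carrier"
  by (simp add: cl_carrier_def cl_mul_alt)

lemma reindex_symdiff:
  assumes "X \<subseteq> Omega"
  shows "(\<Sum>Z\<in>Pow Omega. F Z) = (\<Sum>Y\<in>Pow Omega. F (symdiff X Y)) "
  by (rule sum.reindex_bij_witness[of _ "symdiff X" "symdiff X"]) (use assms in \<open>auto simp: symdiff_subI\<close>)

lemma cl_mul_assoc: "cl_mul (cl_mul f g) h = cl_mul f (cl_mul g h)"
proof
  fix W
  show "cl_mul (cl_mul f g) h W = cl_mul f (cl_mul g h) W"
  proof (cases "W \<subseteq> Omega")
    case False thus ?thesis by (simp add: cl_mul_alt)
  next
    case True
    let ?P = "Pow Omega"
    have L: "cl_mul (cl_mul f g) h W = (\<Sum>X\<in>?P. \<Sum>Y\<in>?P. cl_sign (symdiff X Y) (symdiff (symdiff X Y) W) * cl_sign X Y * f X * g Y * h (symdiff (symdiff X Y) W))"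
    proof -
      have "cl_mul (cl_mul f g) h W = (\<Sum>Z\<in>?P. cl_sign Z (symdiff Z W) * cl_mul f g Z * h (symdiff Z W))"
        using True by (simp add: cl_mul_alt[of "cl_mul f g"])
      also have "\<dots> = (\<Sum>Z\<in>?P. \<Sum>X\<in>?P. cl_sign Z (symdiff Z W) * (cl_sign X (symdiff X Z) * f X * g (symdiff X Z)) * h (symdiff Z W))"
        by (rule sum.cong[OF refl]) (simp add: cl_mul_alt[of f g] sum_distrib_left sum_distrib_right)
      also have "\<dots> = (\<Sum>X\<in>?P. \<Sum>Z\<in>?P. cl_sign Z (symdiff Z W) * (cl_sign X (symdiff X Z) * f X * g (symdiff X Z)) * h (symdiff Z W))"
        by (rule sum.swap)
      also have "\<dots> = (\<Sum>X\<in>?P. \<Sum>Y\<in>?P. cl_sign (symdiff X Y) (symdiff (symdiff X Y) W) * cl_sign X Y * f X * g Y * h (symdiff (symdiff X Y) W))"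
      proof (rule sum.cong[OF refl])
        fix X assume X: "X \<in> ?P"
        show "(\<Sum>Z\<in>?P. cl_sign Z (symdiff Z W) * (cl_sign X (symdiff X Z) * f X * g (symdiff X Z)) * h (symdiff Z W))
          = (\<Sum>Y\<in>?P. cl_sign (symdiff X Y) (symdiff (symdiff X Y) W) * cl_sign X Y * f X * g Y * h (symdiff (symdiff X Y) W))"
          using X by (subst reindex_symdiff[of X]) (simp_all add: mult.assoc)
      qed
      finally show ?thesis .
    qed
    have R: "cl_mul f (cl_mul g h) W = (\<Sum>X\<in>?P. \<Sum>Y\<in>?P. cl_sign X (symdiff X W) * cl_sign Y (symdiff Y (symdiff X W)) * f X * g Y * h (symdiff Y (symdiff X W)))"
    proof -
      have "cl_mul f (cl_mul g h) W = (\<Sum>X\<in>?P. cl_sign X (symdiff X W) * f X * cl_mul g h (symdiff X W))"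
        using True by (simp add: cl_mul_alt[of f])
      also have "\<dots> = (\<Sum>X\<in>?P. \<Sum>Y\<in>?P. cl_sign X (symdiff X W) * cl_sign Y (symdiff Y (symdiff X W)) * f X * g Y * h (symdiff Y (symdiff X W)))"
      proof (rule sum.cong[OF refl])
        fix X assume X: "X \<in> ?P"
        then have "symdiff X W \<subseteq> Omega" using True by (simp add: symdiff_subI)
        then show "cl_sign X (symdiff X W) * f X * cl_mul g h (symdiff X W) = (\<Sum>Y\<in>?P. cl_sign X (symdiff X W) * cl_sign Y (symdiff Y (symdiff X W)) * f X * g Y * h (symdiff Y (symdiff X W)))"
          by (simp add: cl_mul_alt[of g h] sum_distrib_left mult_ac)
      qed
      finally show ?thesis .
    qed
    show ?thesis unfolding L R
    proof (intro sum.cong[OF refl])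
      fix X Y assume X: "X \<in> ?P" and Y: "Y \<in> ?P"
      define Y' where "Y' = symdiff (symdiff X Y) W"
      have e1: "symdiff Y Y' = symdiff X W" "symdiff Y (symdiff X W) = Y'" "symdiff (symdiff X Y) W = Y'"
        by (auto simp: Y'_def symdiff_def)
      have fin: "finite X" "finite Y" "finite Y'"
        using X Y True by (auto simp: Y'_def symdiff_def intro: finite_sub_Omega)
      have c: "cl_sign X Y * cl_sign (symdiff X Y) Y' = cl_sign X (symdiff Y Y') * cl_sign Y Y'"
        by (rule cl_sign_cocycle[OF fin])
      show "cl_sign (symdiff X Y) (symdiff (symdiff X Y) W) * cl_sign X Y * f X * g Y * h (symdiff (symdiff X Y) W) =
         cl_sign X (symdiff X W) * cl_sign Y (symdiff Y (symdiff X W)) * f X * g Y * h (symdiff Y (symdiff X W))"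
        unfolding e1 using c e1(1) by (simp add: mult_ac)
    qed
  qed
qed

lemma cl_e_mul:
  assumes "X \<subseteq> Omega" "Y \<subseteq> Omega"
  shows "cl_mul (cl_e X) (cl_e Y) = cl_smul (cl_sign X Y) (cl_e (symdiff X Y))"
proof
  fix Z
  show "cl_mul (cl_e X) (cl_e Y) Z = cl_smul (cl_sign X Y) (cl_e (symdiff X Y)) Z"
  proof (cases "Z \<subseteq> Omega")
    case False
    then have "Z \<noteq> symdiff X Y" using assms symdiff_subI by blast
    with False show ?thesis by (simp add: cl_mul_alt cl_smul_def cl_e_def)
  next
    case True
    have "cl_mul (cl_e X) (cl_e Y) Z = (\<Sum>X'\<in>Pow Omega. cl_sign X' (symdiff X' Z) * cl_e X X' * cl_e Y (symdiff X' Z))"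
      unfolding cl_mul_alt using True by simp
    also have "\<dots> = (\<Sum>X'\<in>Pow Omega. if X' = X then cl_sign X (symdiff X Z) * cl_e Y (symdiff X Z) else 0)"
      by (rule sum.cong[OF refl]) (simp add: cl_e_def)
    also have "\<dots> = cl_sign X (symdiff X Z) * cl_e Y (symdiff X Z)" using assms by simp
    also have "\<dots> = cl_smul (cl_sign X Y) (cl_e (symdiff X Y)) Z"
      by (auto simp: cl_smul_def cl_e_def symdiff_eq_iff)
    finally show ?thesis .
  qed
qed

lemma cl_mul_add_left: "cl_mul (cl_add f g) h = cl_add (cl_mul f h) (cl_mul g h)"
  by (rule ext) (simp add: cl_mul_alt cl_add_def algebra_simps sum.distrib)
lemma cl_mul_add_right: "cl_mul f (cl_add g h) = cl_add (cl_mul f g) (cl_mul f h)"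
  by (rule ext) (simp add: cl_mul_alt cl_add_def algebra_simps sum.distrib)
lemma cl_mul_smul_left: "cl_mul (cl_smul c f) h = cl_smul c (cl_mul f h)"
  by (rule ext) (simp add: cl_mul_alt cl_smul_def algebra_simps sum_distrib_left)
lemma cl_mul_smul_right: "cl_mul f (cl_smul c h) = cl_smul c (cl_mul f h)"
  by (rule ext) (simp add: cl_mul_alt cl_smul_def algebra_simps sum_distrib_left)
lemma cl_mul_neg_left: "cl_mul (cl_neg f) h = cl_neg (cl_mul f h)"
  by (rule ext) (simp add: cl_mul_alt cl_neg_def sum_negf)
lemma cl_mul_neg_right: "cl_mul f (cl_neg h) = cl_neg (cl_mul f h)"
  by (rule ext) (simp add: cl_mul_alt cl_neg_def sum_negf)

lemma cl_one_mul: "f \<in> cl_carrier \<Longrightarrow> cl_mul cl_one f = f"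
proof (rule ext)
  fix Z assume f: "f \<in> cl_carrier"
  show "cl_mul cl_one f Z = f Z"
  proof (cases "Z \<subseteq> Omega")
    case True
    have "cl_mul cl_one f Z = (\<Sum>X\<in>Pow Omega. cl_sign X (symdiff X Z) * cl_one X * f (symdiff X Z))"
      unfolding cl_mul_alt using True by simp
    also have "\<dots> = (\<Sum>X\<in>Pow Omega. if X = {} then f Z else 0)"
      by (rule sum.cong[OF refl]) (simp add: cl_one_def cl_e_def)
    also have "\<dots> = f Z" by simp
    finally show ?thesis .
  qed (use f in \<open>auto simp: cl_mul_alt cl_carrier_def\<close>)
qed

lemma cl_mul_one: "f \<in> cl_carrier \<Longrightarrow> cl_mul f cl_one = f"
proof (rule ext)
  fix Z assume f: "f \<in> cl_carrier"
  show "cl_mul f cl_one Z = f Z"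
  proof (cases "Z \<subseteq> Omega")
    case True
    have "cl_mul f cl_one Z = (\<Sum>X\<in>Pow Omega. cl_sign X (symdiff X Z) * f X * cl_one (symdiff X Z))"
      unfolding cl_mul_alt using True by simp
    also have "\<dots> = (\<Sum>X\<in>Pow Omega. if X = Z then cl_sign X (symdiff X Z) * f X else 0)"
      by (rule sum.cong[OF refl]) (auto simp add: cl_one_def cl_e_def symdiff_eq_iff)
    also have "\<dots> = f Z" using True by simp
    finally show ?thesis .
  qed (use f in \<open>auto simp: cl_mul_alt cl_carrier_def\<close>)
qed


section \<open>The algebra type\<close>

lemma cl_carrier_simps[simp]:
  "cl_zero \<in> cl_carrier" "cl_one \<in> cl_carrier"
  "f \<in> cl_carrier \<Longrightarrow> g \<in> cl_carrier \<Longrightarrow> cl_add f g \<in> cl_carrier"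
  "f \<in> cl_carrier \<Longrightarrow> cl_neg f \<in> cl_carrier"
  "f \<in> cl_carrier \<Longrightarrow> cl_smul c f \<in> cl_carrier"
  "X \<subseteq> Omega \<Longrightarrow> cl_e X \<in> cl_carrier"
  by (auto simp: cl_carrier_def cl_zero_def cl_one_def cl_e_def cl_add_def cl_neg_def cl_smul_def)

typedef clt = cl_carrier
  morphisms Rp Ab
  by (rule exI[of _ cl_zero]) simp

setup_lifting type_definition_clt

instantiation clt :: real_algebra_1
begin
lift_definition zero_clt :: clt is cl_zero by simp
lift_definition one_clt :: clt is cl_one by simp
lift_definition plus_clt :: "clt \<Rightarrow> clt \<Rightarrow> clt" is cl_add by simp
lift_definition uminus_clt :: "clt \<Rightarrow> clt" is cl_neg by simp
lift_definition minus_clt :: "clt \<Rightarrow> clt \<Rightarrow> clt" is "\<lambda>f g. cl_add f (cl_neg g)" by simp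
lift_definition times_clt :: "clt \<Rightarrow> clt \<Rightarrow> clt" is cl_mul by simp
lift_definition scaleR_clt :: "real \<Rightarrow> clt \<Rightarrow> clt" is cl_smul by simp
instance
proof (standard; transfer)
  show "\<And>a b c. cl_mul (cl_mul a b) c = cl_mul a (cl_mul b c)" by (rule cl_mul_assoc)
  show "\<And>a b c. cl_mul (cl_add a b) c = cl_add (cl_mul a c) (cl_mul b c)" by (rule cl_mul_add_left)
  show "\<And>a b c. cl_mul a (cl_add b c) = cl_add (cl_mul a b) (cl_mul a c)" by (rule cl_mul_add_right)
  show "\<And>a. a \<in> cl_carrier \<Longrightarrow> cl_mul cl_one a = a" by (rule cl_one_mul)
  show "\<And>a. a \<in> cl_carrier \<Longrightarrow> cl_mul a cl_one = a" by (rule cl_mul_one)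
  show "\<And>a x y. cl_mul (cl_smul a x) y = cl_smul a (cl_mul x y)" by (rule cl_mul_smul_left)
  show "\<And>a x y. cl_mul x (cl_smul a y) = cl_smul a (cl_mul x y)" by (rule cl_mul_smul_right)
  show "cl_zero \<noteq> cl_one" by (auto simp: cl_zero_def cl_one_def cl_e_def fun_eq_iff)
qed (auto simp: cl_add_def cl_neg_def cl_smul_def cl_zero_def fun_eq_iff algebra_simps)
end

definition E :: "nat set \<Rightarrow> clt" where "E X = Ab (cl_e X)"

lemma Rp_E: "X \<subseteq> Omega \<Longrightarrow> Rp (E X) = cl_e X"
  by (simp add: E_def Ab_inverse)

lemma E_mul: "X \<subseteq> Omega \<Longrightarrow> Y \<subseteq> Omega \<Longrightarrow> E X * E Y = cl_sign X Y *\<^sub>R E (symdiff X Y)"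
  by (simp add: Rp_inject[symmetric] times_clt.rep_eq scaleR_clt.rep_eq Rp_E cl_e_mul symdiff_subI)

lemma E_empty: "E {} = 1"
  by (simp add: Rp_inject[symmetric] one_clt.rep_eq Rp_E cl_one_def)


section \<open>kernel\<close>

lemma cm_kernel_carrier: "n \<in> cm_kernel G \<Longrightarrow> n \<in> cl_carrier"
  by (induction rule: cm_kernel.induct) (auto simp: cl_carrier_def cl_zero_def cl_add_def cl_neg_def cl_mul_alt)

lemma cm_kernel_add: "n \<in> cm_kernel G \<Longrightarrow> m \<in> cm_kernel G \<Longrightarrow> cl_add n m \<in> cm_kernel G"
proof (induction rule: cm_kernel.induct)
  case zero then show ?case by (simp add: cl_add_def cl_zero_def)
next
  case (step x g n)
  have "cl_add (cl_add (cl_add (cl_mul x g) (cl_neg x)) n) m = cl_add (cl_add (cl_mul x g) (cl_neg x)) (cl_add n m)"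
    by (simp add: cl_add_def add.assoc)
  then show ?case using step by (simp add: cm_kernel.step)
qed

lemma cm_kernel_smul: "n \<in> cm_kernel G \<Longrightarrow> cl_smul c n \<in> cm_kernel G"
proof (induction rule: cm_kernel.induct)
  case zero
  have "cl_smul c cl_zero = cl_zero" by (simp add: cl_smul_def cl_zero_def)
  then show ?case by (simp add: cm_kernel.zero)
next
  case (step x g n)
  have "cl_smul c (cl_add (cl_add (cl_mul x g) (cl_neg x)) n) = cl_add (cl_add (cl_mul (cl_smul c x) g) (cl_neg (cl_smul c x))) (cl_smul c n)"
    by (simp add: cl_mul_smul_left) (simp add: cl_add_def cl_smul_def cl_neg_def algebra_simps)
  then show ?case using step by (simp add: cm_kernel.step)
qed

lemma cm_kernel_lmul: "n \<in> cm_kernel G \<Longrightarrow> cl_mul z n \<in> cm_kernel G"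
proof (induction rule: cm_kernel.induct)
  case zero
  have "cl_mul z cl_zero = cl_zero" by (simp add: cl_mul_alt cl_zero_def fun_eq_iff)
  then show ?case by (simp add: cm_kernel.zero)
next
  case (step x g n)
  have "cl_mul z (cl_add (cl_add (cl_mul x g) (cl_neg x)) n) = cl_add (cl_add (cl_mul (cl_mul z x) g) (cl_neg (cl_mul z x))) (cl_mul z n)"
    by (simp add: cl_mul_add_right cl_mul_neg_right cl_mul_assoc)
  then show ?case using step by (simp add: cm_kernel.step)
qed

lemma cm_kernel_gen: "x \<in> cl_carrier \<Longrightarrow> g \<in> G \<Longrightarrow> cl_add (cl_mul x g) (cl_neg x) \<in> cm_kernel G"
proof -
  assume "x \<in> cl_carrier" "g \<in> G"
  then have "cl_add (cl_add (cl_mul x g) (cl_neg x)) cl_zero \<in> cm_kernel G" by (rule cm_kernel.step) (rule cm_kernel.zero)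
  moreover have "cl_add (cl_add (cl_mul x g) (cl_neg x)) cl_zero = cl_add (cl_mul x g) (cl_neg x)"
    by (simp add: cl_add_def cl_zero_def)
  ultimately show ?thesis by simp
qed

definition eqv :: "cl set \<Rightarrow> clt \<Rightarrow> clt \<Rightarrow> bool" where
  "eqv G a b \<longleftrightarrow> Rp (a - b) \<in> cm_kernel G"

lemma cm_eq_eqv: "cm_eq G (Rp a) (Rp b) = eqv G a b"
  by (simp add: cm_eq_def eqv_def minus_clt.rep_eq)

lemma eqv_refl: "eqv G a a"
  by (simp add: eqv_def zero_clt.rep_eq cm_kernel.zero)

lemma eqv_sym: "eqv G a b \<Longrightarrow> eqv G b a"
proof -
  assume "eqv G a b"
  then have "cl_smul (-1) (Rp (a - b)) \<in> cm_kernel G" unfolding eqv_def by (rule cm_kernel_smul)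
  moreover have "b - a = (-1) *\<^sub>R (a - b)" by simp
  ultimately show ?thesis unfolding eqv_def by (simp only: scaleR_clt.rep_eq)
qed

lemma eqv_trans: "eqv G a b \<Longrightarrow> eqv G b c \<Longrightarrow> eqv G a c"
proof -
  assume "eqv G a b" "eqv G b c"
  then have "cl_add (Rp (a - b)) (Rp (b - c)) \<in> cm_kernel G" unfolding eqv_def by (rule cm_kernel_add)
  moreover have "a - c = (a - b) + (b - c)" by simp
  ultimately show ?thesis unfolding eqv_def by (simp only: plus_clt.rep_eq)
qed

lemma eqv_add: "eqv G a b \<Longrightarrow> eqv G c d \<Longrightarrow> eqv G (a + c) (b + d)"
proof -
  assume "eqv G a b" "eqv G c d"
  then have "cl_add (Rp (a - b)) (Rp (c - d)) \<in> cm_kernel G" unfolding eqv_def by (rule cm_kernel_add)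
  moreover have "(a + c) - (b + d) = (a - b) + (c - d)" by simp
  ultimately show ?thesis unfolding eqv_def by (simp only: plus_clt.rep_eq)
qed

lemma eqv_scale: "eqv G a b \<Longrightarrow> eqv G (r *\<^sub>R a) (r *\<^sub>R b)"
proof -
  assume "eqv G a b"
  then have "cl_smul r (Rp (a - b)) \<in> cm_kernel G" unfolding eqv_def by (rule cm_kernel_smul)
  moreover have "r *\<^sub>R a - r *\<^sub>R b = r *\<^sub>R (a - b)" by (simp add: scaleR_right_diff_distrib)
  ultimately show ?thesis unfolding eqv_def by (simp only: scaleR_clt.rep_eq)
qed

lemma eqv_lmul: "eqv G a b \<Longrightarrow> eqv G (z * a) (z * b)"
proof -
  assume "eqv G a b"
  then have "cl_mul (Rp z) (Rp (a - b)) \<in> cm_kernel G" unfolding eqv_def by (rule cm_kernel_lmul)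
  moreover have "z * a - z * b = z * (a - b)" by (simp add: right_diff_distrib)
  ultimately show ?thesis unfolding eqv_def by (simp only: times_clt.rep_eq)
qed

lemma eqv_G: "g \<in> G \<Longrightarrow> g \<in> cl_carrier \<Longrightarrow> eqv G (a * Ab g) a"
  unfolding eqv_def
  by (simp add: minus_clt.rep_eq times_clt.rep_eq Ab_inverse Rp cm_kernel_gen)

lemma E_single_mul:
  assumes "a \<in> Omega" "S \<subseteq> Omega" "a \<notin> S"
  shows "E {a} * E S = cl_sign {a} S *\<^sub>R E (insert a S)"
proof -
  have "symdiff {a} S = insert a S" using assms by (auto simp: symdiff_def)
  then show ?thesis using assms by (simp add: E_mul)
qed

lemma E_list:
  assumes "distinct xs" "set xs \<subseteq> Omega"
  shows "\<exists>s. (s = 1 \<or> s = -1) \<and> foldr (\<lambda>a t. E {a} * t) xs 1 = s *\<^sub>R E (set xs)"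
  using assms
proof (induction xs)
  case Nil then show ?case by (auto simp: E_empty intro!: exI[of _ 1])
next
  case (Cons a xs)
  then obtain s where s: "s = 1 \<or> s = -1" "foldr (\<lambda>a t. E {a} * t) xs 1 = s *\<^sub>R E (set xs)" by auto
  have "foldr (\<lambda>a t. E {a} * t) (a # xs) 1 = (s * cl_sign {a} (set xs)) *\<^sub>R E (set (a # xs))"
    using s(2) Cons.prems by (simp add: E_single_mul)
  moreover have "s * cl_sign {a} (set xs) = 1 \<or> s * cl_sign {a} (set xs) = -1"
    using s(1) cl_sign_pm[of "{a}" "set xs"] by auto
  ultimately show ?case by blast
qed

lemma E_sq1: "i \<in> Omega \<Longrightarrow> E {i} * E {i} = -1"
  by (simp add: E_mul cl_sign_single_self E_empty)

lemma E_anti: "i \<in> Omega \<Longrightarrow> j \<in> Omega \<Longrightarrow> i \<noteq> j \<Longrightarrow> E {j} * E {i} = - (E {i} * E {j})"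
proof -
  assume a: "i \<in> Omega" "j \<in> Omega" "i \<noteq> j"
  have "cl_sign {j} {i} = - cl_sign {i} {j}"
    using cl_sign_single_swap[OF a(3)] cl_sign_pm[of "{i}" "{j}"] by auto
  moreover have "symdiff {j} {i} = symdiff {i} {j}" by (rule symdiff_comm)
  ultimately show ?thesis using a by (simp add: E_mul)
qed


definition fp :: "nat \<Rightarrow> nat \<Rightarrow> clt" where "fp i j = E {i} * E {j}"

lemma fp_sq: "i \<in> Omega \<Longrightarrow> j \<in> Omega \<Longrightarrow> i \<noteq> j \<Longrightarrow> fp i j * fp i j = -1"
proof -
  assume a: "i \<in> Omega" "j \<in> Omega" "i \<noteq> j"
  have r: "E {j} * (E {i} * w) = - (E {i} * (E {j} * w))" "E {i} * (E {i} * w) = - w" "E {j} * (E {j} * w) = - w" for w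
  proof -
    show "E {j} * (E {i} * w) = - (E {i} * (E {j} * w))"
      by (simp only: mult.assoc[symmetric] E_anti[OF a]) simp
    show "E {i} * (E {i} * w) = - w"
      by (simp only: mult.assoc[symmetric] E_sq1[OF a(1)]) simp
    show "E {j} * (E {j} * w) = - w"
      by (simp only: mult.assoc[symmetric] E_sq1[OF a(2)]) simp
  qed
  show ?thesis using a by (simp add: fp_def mult.assoc r E_sq1)
qed

lemma fp_comm:
  assumes "distinct [a, b, c, d]" "{a, b, c, d} \<subseteq> Omega"
  shows "fp a b * fp c d = fp c d * fp a b"
proof -
  have r: "E {a} * (E {c} * w) = - (E {c} * (E {a} * w))" "E {a} * (E {d} * w) = - (E {d} * (E {a} * w))"
    "E {b} * (E {c} * w) = - (E {c} * (E {b} * w))" "E {b} * (E {d} * w) = - (E {d} * (E {b} * w))" for w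
    using assms by (simp_all add: mult.assoc[symmetric] E_anti[of c a] E_anti[of d a] E_anti[of c b] E_anti[of d b])
  have r2: "E {b} * E {d} = - (E {d} * E {b})" "E {a} * E {d} = - (E {d} * E {a})"
    using assms by (simp_all add: E_anti[of d b] E_anti[of d a])
  show ?thesis by (simp add: fp_def mult.assoc r r2)
qed

lemma cl_vec_two:
  assumes "i \<in> Omega" "j \<in> Omega" "i \<noteq> j"
  shows "cl_vec (\<lambda>k. if k = i then a else if k = j then b else 0) = Rp (a *\<^sub>R E {i} + b *\<^sub>R E {j})"
proof (rule ext)
  fix Z
  have R: "Rp (a *\<^sub>R E {i} + b *\<^sub>R E {j}) Z = a * (if Z = {i} then 1 else 0) + b * (if Z = {j} then 1 else 0)"
    using assms by (simp add: plus_clt.rep_eq scaleR_clt.rep_eq Rp_E cl_add_def cl_smul_def cl_e_def)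
  show "cl_vec (\<lambda>k. if k = i then a else if k = j then b else 0) Z = Rp (a *\<^sub>R E {i} + b *\<^sub>R E {j}) Z"
  proof (cases "Z \<subseteq> Omega \<and> card Z = 1")
    case True
    then obtain z where z: "Z = {z}" by (auto simp: card_1_singleton_iff)
    show ?thesis unfolding R using True assms by (auto simp: z cl_vec_def)
  next
    case False
    then have "Z \<noteq> {i}" "Z \<noteq> {j}" using assms by auto
    moreover have "cl_vec (\<lambda>k. if k = i then a else if k = j then b else 0) Z = 0"
      by (simp only: cl_vec_def if_not_P[OF False])
    ultimately show ?thesis unfolding R by simp
  qed
qed

lemma sum_sq_two:
  assumes "i \<in> Omega" "j \<in> Omega" "i \<noteq> j"
  shows "(\<Sum>k\<in>Omega. ((\<lambda>k. if k = i then a else if k = j then b else 0) k)\<^sup>2) = a\<^sup>2 + (b::real)\<^sup>2"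
proof -
  have "(\<Sum>k\<in>Omega. ((\<lambda>k. if k = i then a else if k = j then b else 0) k)\<^sup>2)
      = (\<Sum>k\<in>Omega. (if k = i then a\<^sup>2 else 0) + (if k = j then b\<^sup>2 else 0))"
    by (rule sum.cong[OF refl]) (use assms in auto)
  also have "\<dots> = a\<^sup>2 + b\<^sup>2" using assms by (simp add: sum.distrib)
  finally show ?thesis .
qed

lemma uv_pair:
  assumes "i \<in> Omega" "j \<in> Omega" "i \<noteq> j" "e = 1 \<or> e = -1"
  shows "\<exists>u v. u \<in> unit_vecs \<and> v \<in> unit_vecs \<and> u \<in> cl_carrier \<and> v \<in> cl_carrier \<and>
     Ab u * Ab v = (1 / sqrt 2) *\<^sub>R (1 + e *\<^sub>R fp i j)"
proof -
  obtain j' where j': "j' \<in> Omega" "j' \<noteq> i" using assms by auto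
  define u where "u = cl_vec (\<lambda>k. if k = i then 1 else if k = j' then 0 else 0)"
  define v where "v = cl_vec (\<lambda>k. if k = i then - (1 / sqrt 2) else if k = j then e / sqrt 2 else 0)"
  have u: "u = Rp (1 *\<^sub>R E {i} + 0 *\<^sub>R E {j'})" unfolding u_def using assms j' by (intro cl_vec_two) auto
  have v: "v = Rp ((- (1 / sqrt 2)) *\<^sub>R E {i} + (e / sqrt 2) *\<^sub>R E {j})" unfolding v_def using assms by (intro cl_vec_two) auto
  have "u \<in> unit_vecs" unfolding u_def unit_vecs_def
    using sum_sq_two[of i j' 1 0] assms j' by auto
  moreover have "v \<in> unit_vecs" unfolding v_def unit_vecs_def
  proof -
    have "(- (1 / sqrt 2))\<^sup>2 + (e / sqrt 2)\<^sup>2 = (1::real)"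
      using assms(4) by (auto simp: power_divide)
    then show "cl_vec (\<lambda>k. if k = i then - (1 / sqrt 2) else if k = j then e / sqrt 2 else 0)
      \<in> {cl_vec v |v. (\<Sum>i\<in>Omega. (v i)\<^sup>2) = 1}"
      using sum_sq_two[of i j "- (1 / sqrt 2)" "e / sqrt 2"] assms by auto
  qed
  moreover have "u \<in> cl_carrier" "v \<in> cl_carrier" unfolding u v using Rp by auto
  moreover have "Ab u * Ab v = (1 / sqrt 2) *\<^sub>R (1 + e *\<^sub>R fp i j)"
  proof -
    have "Ab u * Ab v = E {i} * ((- (1 / sqrt 2)) *\<^sub>R E {i} + (e / sqrt 2) *\<^sub>R E {j})"
      unfolding u v by (simp add: Rp_inverse)
    also have "\<dots> = (- (1 / sqrt 2)) *\<^sub>R (E {i} * E {i}) + (e / sqrt 2) *\<^sub>R (E {i} * E {j})"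
      by (simp only: distrib_left mult_scaleR_right)
    also have "\<dots> = (1 / sqrt 2) *\<^sub>R (1 + e *\<^sub>R fp i j)"
      using assms by (simp add: E_sq1 fp_def scaleR_add_right)
    finally show ?thesis .
  qed
  ultimately show ?thesis by blast
qed

lemma foldr_Rp: "set us \<subseteq> cl_carrier \<Longrightarrow> foldr cl_mul us cl_one = Rp (foldr (\<lambda>u t. Ab u * t) us 1)"
proof (induction us)
  case Nil then show ?case by (simp add: one_clt.rep_eq)
next
  case (Cons u us)
  then show ?case by (simp add: times_clt.rep_eq Ab_inverse)
qed

lemma Spin_carrier: "x \<in> Spin \<Longrightarrow> x \<in> cl_carrier"
  unfolding Spin_def by (auto simp: neq_Nil_conv) (metis cl_carrier_simps(2) cl_mul_carrier foldr.simps(1) foldr.simps(2) id_apply list.exhaust o_apply)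

lemma good_G_delta:
  assumes "good_G Gc G" "D \<in> Gc" "D \<subseteq> Omega"
  shows "\<exists>\<delta>. (\<delta> = 1 \<or> \<delta> = -1) \<and> (\<forall>a. eqv G (a * (\<delta> *\<^sub>R E D)) a)"
proof -
  have GS: "\<And>g. g \<in> G \<Longrightarrow> g \<in> cl_carrier" using assms(1) Spin_carrier unfolding good_G_def by blast
  have x: "(cl_e D \<in> G) \<noteq> (cl_neg (cl_e D) \<in> G)" using assms unfolding good_G_def by blast
  show ?thesis
  proof (cases "cl_e D \<in> G")
    case True
    then have "\<forall>a. eqv G (a * (1 *\<^sub>R E D)) a" using GS by (simp add: E_def eqv_G)
    then show ?thesis by blast
  next
    case False
    then have m: "cl_neg (cl_e D) \<in> G" using x by simp
    have "Ab (cl_neg (cl_e D)) = (-1) *\<^sub>R E D"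
      using assms(3) by (simp add: Rp_inject[symmetric] Ab_inverse uminus_clt.rep_eq Rp_E)
    then have "\<forall>a. eqv G (a * ((-1) *\<^sub>R E D)) a" using GS m eqv_G by metis
    then show ?thesis by blast
  qed
qed


section \<open>orbit construction\<close>

lemma alg4:
  fixes x1 x2 x3 :: "'a::ring_1"
  assumes s1: "x1*x1 = -1" and s2: "x2*x2 = -1" and s3: "x3*x3 = -1"
    and c12: "x2*x1 = x1*x2" and c13: "x3*x1 = x1*x3" and c23: "x3*x2 = x2*x3"
  shows "(1+x1)*(1+x2)*(1+x3) - (1+x1)*(1+x2)*(1+x3)*(x1*x2*x3) = (1 + x1*x2 + x1*x3 + x2*x3) + (1 + x1*x2 + x1*x3 + x2*x3)"
    and "x4 = - ((x1*x2*x3) * (x1*x2*x3*x4))"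
    and "x2*x3 = - ((x1*x2)*(x1*x3))"
proof -
  have r: "x1*(x1*w) = -w" "x2*(x2*w) = -w" "x3*(x3*w) = -w"
    "x2*(x1*w) = x1*(x2*w)" "x3*(x1*w) = x1*(x3*w)" "x3*(x2*w) = x2*(x3*w)" for w
    by (simp_all add: mult.assoc[symmetric] s1 s2 s3 c12 c13 c23)
  show "(1+x1)*(1+x2)*(1+x3) - (1+x1)*(1+x2)*(1+x3)*(x1*x2*x3) = (1 + x1*x2 + x1*x3 + x2*x3) + (1 + x1*x2 + x1*x3 + x2*x3)"
    by (simp add: algebra_simps r s1 s2 s3 c12 c13 c23)
  show "x4 = - ((x1*x2*x3) * (x1*x2*x3*x4))"
    by (simp add: mult.assoc r)
  show "x2*x3 = - ((x1*x2)*(x1*x3))"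
    by (simp add: mult.assoc r s1)
qed

lemma quarter_double: "(1/4::real) *\<^sub>R (W + W) = (1/2::real) *\<^sub>R (W::'a::real_vector)"
proof -
  have "(1/4::real) *\<^sub>R (W + W) = (1/4 + 1/4::real) *\<^sub>R W" by (simp only: scaleR_add_right scaleR_add_left)
  then show ?thesis by simp
qed

lemma pm_sq: "s = 1 \<or> s = -1 \<Longrightarrow> s * s = (1::real)" by auto

lemma orbit:
  assumes G: "good_G Gc G"
    and dist: "distinct [i1, j1, i2, j2, i3, j3, i4, j4]"
    and om: "{i1, j1, i2, j2, i3, j3, i4, j4} \<subseteq> Omega"
    and DG: "{i1, j1, i2, j2, i3, j3, i4, j4} \<in> Gc"
    and al: "\<alpha> = 1 \<or> \<alpha> = -1" and be: "\<beta> = 1 \<or> \<beta> = -1"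
  shows "\<exists>g\<in>Spin. eqv G (Ab g) ((1/2) *\<^sub>R (1 + \<alpha> *\<^sub>R E {i1, j1, i2, j2} + \<beta> *\<^sub>R E {i1, j1, i3, j3}
            - (\<alpha>*\<beta>) *\<^sub>R (E {i1, j1, i2, j2} * E {i1, j1, i3, j3})))"
proof -
  define A where "A = {i1, j1, i2, j2}"
  define B where "B = {i1, j1, i3, j3}"
  define D where "D = {i1, j1, i2, j2, i3, j3, i4, j4}"
  have omega: "i1 \<in> Omega" "j1 \<in> Omega" "i2 \<in> Omega" "j2 \<in> Omega" "i3 \<in> Omega" "j3 \<in> Omega" "i4 \<in> Omega" "j4 \<in> Omega"
    using om by auto
  obtain sA where sA: "sA = 1 \<or> sA = -1" "fp i1 j1 * fp i2 j2 = sA *\<^sub>R E A"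
  proof -
    obtain s where "s = 1 \<or> s = -1" "foldr (\<lambda>a t. E {a} * t) [i1,j1,i2,j2] 1 = s *\<^sub>R E (set [i1,j1,i2,j2])"
      using E_list[of "[i1,j1,i2,j2]"] dist om by auto
    then show ?thesis using that by (simp add: fp_def mult.assoc A_def)
  qed
  obtain sB where sB: "sB = 1 \<or> sB = -1" "fp i1 j1 * fp i3 j3 = sB *\<^sub>R E B"
  proof -
    obtain s where "s = 1 \<or> s = -1" "foldr (\<lambda>a t. E {a} * t) [i1,j1,i3,j3] 1 = s *\<^sub>R E (set [i1,j1,i3,j3])"
      using E_list[of "[i1,j1,i3,j3]"] dist om by auto
    then show ?thesis using that by (simp add: fp_def mult.assoc B_def)
  qed
  obtain sD where sD: "sD = 1 \<or> sD = -1" "fp i1 j1 * fp i2 j2 * fp i3 j3 * fp i4 j4 = sD *\<^sub>R E D"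
  proof -
    obtain s where "s = 1 \<or> s = -1" "foldr (\<lambda>a t. E {a} * t) [i1, j1, i2, j2, i3, j3, i4, j4] 1 = s *\<^sub>R E (set [i1, j1, i2, j2, i3, j3, i4, j4])"
      using E_list[of "[i1, j1, i2, j2, i3, j3, i4, j4]"] dist om by auto
    then show ?thesis using that by (simp add: fp_def mult.assoc D_def)
  qed
  obtain \<delta> where dl: "\<delta> = 1 \<or> \<delta> = -1" "\<And>a. eqv G (a * (\<delta> *\<^sub>R E D)) a"
    using good_G_delta[OF G, of D] DG om unfolding D_def by blast
  define e2 where "e2 = \<alpha> * sA"
  define e3 where "e3 = \<beta> * sB"
  define e4 where "e4 = e2 * e3 * sD * \<delta>"
  have sq: "sA * sA = 1" "sB * sB = 1" "sD * sD = 1" "\<delta> * \<delta> = 1" "\<alpha> * \<alpha> = 1" "\<beta> * \<beta> = 1"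
    using sA(1) sB(1) sD(1) dl(1) al be by (auto intro: pm_sq)
  have e2pm: "e2 = 1 \<or> e2 = -1" unfolding e2_def using al sA(1) by auto
  have e3pm: "e3 = 1 \<or> e3 = -1" unfolding e3_def using be sB(1) by auto
  have e4pm: "e4 = 1 \<or> e4 = -1" unfolding e4_def using e2pm e3pm sD(1) dl(1) by auto
  define x1 where "x1 = fp i1 j1"
  define x2 where "x2 = e2 *\<^sub>R fp i2 j2"
  define x3 where "x3 = e3 *\<^sub>R fp i3 j3"
  define x4 where "x4 = e4 *\<^sub>R fp i4 j4"
  have dd: "i1 \<noteq> j1" "i2 \<noteq> j2" "i3 \<noteq> j3" "i4 \<noteq> j4" using dist by auto
  have fsq: "fp i1 j1 * fp i1 j1 = -1" "fp i2 j2 * fp i2 j2 = -1" "fp i3 j3 * fp i3 j3 = -1"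
    using fp_sq omega dd by auto
  have esq: "e2 * e2 = 1" "e3 * e3 = 1" using e2pm e3pm by auto
  have s1: "x1 * x1 = -1" and s2: "x2 * x2 = -1" and s3: "x3 * x3 = -1"
    unfolding x1_def x2_def x3_def using fsq esq by simp_all
  have fc: "fp i2 j2 * fp i1 j1 = fp i1 j1 * fp i2 j2" "fp i3 j3 * fp i1 j1 = fp i1 j1 * fp i3 j3"
    "fp i3 j3 * fp i2 j2 = fp i2 j2 * fp i3 j3"
    using dist om by (auto intro!: fp_comm)
  have c12: "x2 * x1 = x1 * x2" and c13: "x3 * x1 = x1 * x3" and c23: "x3 * x2 = x2 * x3"
    unfolding x1_def x2_def x3_def using fc by (simp_all add: mult.commute)
  have x12: "x1 * x2 = \<alpha> *\<^sub>R E A"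
  proof -
    have "x1 * x2 = (e2 * sA) *\<^sub>R E A" unfolding x1_def x2_def by (simp add: sA(2))
    also have "e2 * sA = \<alpha>" unfolding e2_def using sq by (simp add: mult.assoc)
    finally show ?thesis .
  qed
  have x13: "x1 * x3 = \<beta> *\<^sub>R E B"
  proof -
    have "x1 * x3 = (e3 * sB) *\<^sub>R E B" unfolding x1_def x3_def by (simp add: sB(2))
    also have "e3 * sB = \<beta>" unfolding e3_def using sq by (simp add: mult.assoc)
    finally show ?thesis .
  qed
  have P: "x1 * x2 * x3 * x4 = \<delta> *\<^sub>R E D"
  proof -
    have "x1 * x2 * x3 * x4 = (e2 * e3 * e4) *\<^sub>R (fp i1 j1 * fp i2 j2 * fp i3 j3 * fp i4 j4)"
      unfolding x1_def x2_def x3_def x4_def by (simp add: mult.assoc)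
    also have "\<dots> = (e2 * e3 * e4 * sD) *\<^sub>R E D" by (simp add: sD(2))
    also have "e2 * e3 * e4 * sD = \<delta>"
    proof -
      have "e2 * e3 * e4 * sD = (e2 * e2) * (e3 * e3) * (sD * sD) * \<delta>" unfolding e4_def by (simp add: mult_ac)
      then show ?thesis using esq sq by simp
    qed
    finally show ?thesis .
  qed
  obtain u1 v1 where uv1: "u1 \<in> unit_vecs" "v1 \<in> unit_vecs" "u1 \<in> cl_carrier" "v1 \<in> cl_carrier"
      "Ab u1 * Ab v1 = (1 / sqrt 2) *\<^sub>R (1 + x1)"
    using uv_pair[of i1 j1 1] omega dd unfolding x1_def by auto
  obtain u2 v2 where uv2: "u2 \<in> unit_vecs" "v2 \<in> unit_vecs" "u2 \<in> cl_carrier" "v2 \<in> cl_carrier"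
      "Ab u2 * Ab v2 = (1 / sqrt 2) *\<^sub>R (1 + x2)"
    using uv_pair[of i2 j2 e2] omega dd e2pm unfolding x2_def by auto
  obtain u3 v3 where uv3: "u3 \<in> unit_vecs" "v3 \<in> unit_vecs" "u3 \<in> cl_carrier" "v3 \<in> cl_carrier"
      "Ab u3 * Ab v3 = (1 / sqrt 2) *\<^sub>R (1 + x3)"
    using uv_pair[of i3 j3 e3] omega dd e3pm unfolding x3_def by auto
  obtain u4 v4 where uv4: "u4 \<in> unit_vecs" "v4 \<in> unit_vecs" "u4 \<in> cl_carrier" "v4 \<in> cl_carrier"
      "Ab u4 * Ab v4 = (1 / sqrt 2) *\<^sub>R (1 + x4)"
    using uv_pair[of i4 j4 e4] omega dd e4pm unfolding x4_def by auto
  define us where "us = [u1, v1, u2, v2, u3, v3, u4, v4]"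
  define g where "g = foldr cl_mul us cl_one"
  have gS: "g \<in> Spin"
  proof -
    have "even (length us) \<and> set us \<subseteq> unit_vecs" unfolding us_def using uv1 uv2 uv3 uv4 by auto
    then show ?thesis unfolding Spin_def g_def by blast
  qed
  have "g = Rp (foldr (\<lambda>u t. Ab u * t) us 1)" unfolding g_def
    by (rule foldr_Rp) (use uv1 uv2 uv3 uv4 in \<open>auto simp: us_def\<close>)
  then have "Ab g = foldr (\<lambda>u t. Ab u * t) us 1" by (simp add: Rp_inverse)
  also have "\<dots> = (Ab u1 * Ab v1) * ((Ab u2 * Ab v2) * ((Ab u3 * Ab v3) * (Ab u4 * Ab v4)))"
    by (simp add: us_def mult.assoc)
  also have "\<dots> = ((1 / sqrt 2) * (1 / sqrt 2) * ((1 / sqrt 2) * (1 / sqrt 2))) *\<^sub>R ((1 + x1) * ((1 + x2) * ((1 + x3) * (1 + x4))))"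
    unfolding uv1(5) uv2(5) uv3(5) uv4(5) by (simp add: mult_ac)
  also have "(1 / sqrt 2) * (1 / sqrt 2) * ((1 / sqrt 2) * (1 / sqrt 2)) = (1/4::real)"
    by (simp add: divide_simps)
  also have "(1 + x1) * ((1 + x2) * ((1 + x3) * (1 + x4))) = (1+x1)*(1+x2)*(1+x3) + (1+x1)*(1+x2)*(1+x3) * x4"
  proof -
    have "(1 + x1) * ((1 + x2) * ((1 + x3) * (1 + x4))) = ((1+x1)*(1+x2)*(1+x3)) * (1 + x4)" by (simp only: mult.assoc)
    also have "\<dots> = (1+x1)*(1+x2)*(1+x3) + (1+x1)*(1+x2)*(1+x3) * x4"
      by (simp only: distrib_left[of "(1+x1)*(1+x2)*(1+x3)" 1 x4] mult_1_right)
    finally show ?thesis .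
  qed
  finally have gform: "Ab g = (1/4) *\<^sub>R ((1+x1)*(1+x2)*(1+x3) + (1+x1)*(1+x2)*(1+x3) * x4)" .
  define y where "y = (1+x1)*(1+x2)*(1+x3)"
  note a4 = alg4[OF s1 s2 s3 c12 c13 c23]
  have yx4: "y * x4 = (- (y * (x1 * x2 * x3))) * (\<delta> *\<^sub>R E D)"
  proof -
    have "y * x4 = y * (- ((x1*x2*x3) * (x1*x2*x3*x4)))" using a4(2)[of x4] by simp
    also have "\<dots> = (- (y * (x1 * x2 * x3))) * (x1*x2*x3*x4)" by (simp only: mult.assoc mult_minus_left mult_minus_right)
    also have "\<dots> = (- (y * (x1 * x2 * x3))) * (\<delta> *\<^sub>R E D)" by (simp only: P)
    finally show ?thesis .
  qed
  have "eqv G (y + y * x4) (y + (- (y * (x1 * x2 * x3))))"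
    by (rule eqv_add[OF eqv_refl]) (simp only: yx4 dl(2))
  then have "eqv G (y + y * x4) ((1 + x1*x2 + x1*x3 + x2*x3) + (1 + x1*x2 + x1*x3 + x2*x3))"
    using a4(1) unfolding y_def by simp
  then have "eqv G (Ab g) ((1/4) *\<^sub>R ((1 + x1*x2 + x1*x3 + x2*x3) + (1 + x1*x2 + x1*x3 + x2*x3)))"
    unfolding gform y_def by (rule eqv_scale)
  also have "(1/4::real) *\<^sub>R ((1 + x1*x2 + x1*x3 + x2*x3) + (1 + x1*x2 + x1*x3 + x2*x3)) = (1/2::real) *\<^sub>R (1 + x1*x2 + x1*x3 + x2*x3)"
    by (rule quarter_double)
  also have "1 + x1*x2 + x1*x3 + x2*x3 = 1 + \<alpha> *\<^sub>R E A + \<beta> *\<^sub>R E B - (\<alpha>*\<beta>) *\<^sub>R (E A * E B)"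
    unfolding a4(3) x12 x13 by simp
  finally show ?thesis using gS unfolding A_def B_def by blast
qed




lemma symdiff_comm': "symdiff X Y = symdiff Y X" by (auto simp: symdiff_def)

fun xorl :: "bool list \<Rightarrow> bool list \<Rightarrow> bool list" where
  "xorl (a#as) (b#bs) = (a \<noteq> b) # xorl as bs"
| "xorl _ _ = []"

fun popc :: "bool list \<Rightarrow> nat" where
  "popc [] = 0" | "popc (x#xs) = (if x then popc xs + 1 else popc xs)"

definition wfn :: "nat \<Rightarrow> nat" where
  "wfn n = (if n < 8 then 10000 else if n = 8 then 1 else 0)"

fun cnt :: "bool list list \<Rightarrow> bool list \<Rightarrow> nat" where
  "cnt [] w = wfn (popc w)"
| "cnt (g#gs) w = cnt gs w + cnt gs (xorl g w)"

definition tob :: "nat set \<Rightarrow> bool list" where "tob S = map (\<lambda>i. i \<in> S) [0..<24]"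

lemma gl_eval: "map tob golay_gens = [[False, True, True, True, True, False, True, False, True, True, False, False, True, True, False, False, True, False, True, False, False, False, False, True], [False, False, True, True, True, True, False, True, False, True, True, False, False, True, True, False, False, True, False, True, False, False, False, True], [False, False, False, True, True, True, True, False, True, False, True, True, False, False, True, True, False, False, True, False, True, False, False, True], [False, False, False, False, True, True, True, True, False, True, False, True, True, False, False, True, True, False, False, True, False, True, False, True], [False, False, False, False, False, True, True, True, True, False, True, False, True, True, False, False, True, True, False, False, True, False, True, True], [True, False, False, False, False, False, True, True, True, True, False, True, False, True, True, False, False, True, True, False, False, True, False, True], [False, True, False, False, False, False, False, True, True, True, True, False, True, False, True, True, False, False, True, True, False, False, True, True], [True, False, True, False, False, False, False, False, True, True, True, True, False, True, False, True, True, False, False, True, True, False, False, True], [False, True, False, True, False, False, False, False, False, True, True, True, True, False, True, False, True, True, False, False, True, True, False, True], [False, False, True, False, True, False, False, False, False, False, True, True, True, True, False, True, False, True, True, False, False, True, True, True], [True, False, False, True, False, True, False, False, False, False, False, True, True, True, True, False, True, False, True, True, False, False, True, True], [True, True, False, False, True, False, True, False, False, False, False, False, True, True, True, True, False, True, False, True, True, False, False, True]]"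
  by (simp add: tob_def golay_gens_def upt_rec)

lemma cnt_eval: "cnt (map tob golay_gens) (tob {}) = 10759"
proof -
  have "tob {} = [False, False, False, False, False, False, False, False, False, False, False, False, False, False, False, False, False, False, False, False, False, False, False, False]"
    by (simp add: tob_def upt_rec)
  then show ?thesis unfolding gl_eval by (simp add: wfn_def)
qed

lemma choose_eval:
  assumes "k \<le> n" "fact k * fact (n - k) * c = (fact n :: nat)"
  shows "n choose k = c"
proof -
  have "fact k * fact (n - k) * (n choose k) = (fact n :: nat)" by (rule binomial_fact_lemma) fact
  with assms(2) have "fact k * fact (n - k) * (n choose k) = fact k * fact (n - k) * c" by simp
  then show ?thesis by simp
qed

lemma choose_24_5: "(24::nat) choose 5 = 42504"
  by (rule choose_eval) (simp_all add: fact_numeral)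
lemma choose_8_5: "(8::nat) choose 5 = 56"
  by (rule choose_eval) (simp_all add: fact_numeral)


fun selsum :: "bool list \<Rightarrow> nat set list \<Rightarrow> nat set" where
  "selsum (c#b) (g#gs) = symdiff (if c then g else {}) (selsum b gs)"
| "selsum _ _ = {}"

lemma symdiff_empty_l[simp]: "symdiff {} X = X" by (auto simp: symdiff_def)
lemma symdiff_empty_r[simp]: "symdiff X {} = X" by (auto simp: symdiff_def)

lemma map_upt_Suc0: "map f [0..<Suc n] = f 0 # map (\<lambda>i. f (Suc i)) [0..<n]"
proof -
  have "[0..<Suc n] = 0 # [Suc 0..<Suc n]" by (rule upt_conv_Cons) simp
  also have "[Suc 0..<Suc n] = map Suc [0..<n]" by (simp add: map_Suc_upt)
  finally show ?thesis by simp
qed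

lemma nths_selsum: "foldr symdiff (nths gs I) {} = selsum (map (\<lambda>i. i \<in> I) [0..<length gs]) gs"
proof (induction gs arbitrary: I)
  case Nil then show ?case by simp
next
  case (Cons g gs)
  have m: "map (\<lambda>i. i \<in> I) [0..<length (g#gs)] = (0 \<in> I) # map (\<lambda>i. i \<in> {j. Suc j \<in> I}) [0..<length gs]"
    by (simp only: length_Cons map_upt_Suc0) simp
  show ?case unfolding m using Cons.IH[of "{j. Suc j \<in> I}"] by (simp add: nths_Cons)
qed

lemma len_gens: "length golay_gens = 12" by (simp add: golay_gens_def)

lemma selsum_in_std: "length b = 12 \<Longrightarrow> selsum b golay_gens \<in> golay_std"
proof -
  assume b: "length b = 12"
  define I where "I = {i. i < 12 \<and> b ! i}"
  have "map (\<lambda>i. i \<in> I) [0..<12] = b"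
    by (rule nth_equalityI) (auto simp: b I_def)
  then have "selsum b golay_gens = foldr symdiff (nths golay_gens I) {}"
    by (simp add: nths_selsum len_gens)
  moreover have "I \<subseteq> {..<12}" by (auto simp: I_def)
  ultimately show ?thesis unfolding golay_std_def by blast
qed

lemma empty_in_std: "{} \<in> golay_std"
  unfolding golay_std_def by (rule CollectI, rule exI[of _ "{}"]) simp

lemma selsum_sub: "selsum b gs \<subseteq> \<Union> (set gs)"
  by (induction b gs rule: selsum.induct) (auto simp: symdiff_def)

lemma gens_sub: "\<Union> (set golay_gens) \<subseteq> {..<24}"
  by (simp add: golay_gens_def)

lemma selsum_xor: "length b = length gs \<Longrightarrow> length b' = length gs \<Longrightarrow>
   selsum (xorl b b') gs = symdiff (selsum b gs) (selsum b' gs)"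
proof (induction gs arbitrary: b b')
  case Nil then show ?case by simp
next
  case (Cons g gs)
  then obtain c bb c' bb' where "b = c # bb" "b' = c' # bb'" "length bb = length gs" "length bb' = length gs"
    by (metis length_Suc_conv)
  with Cons.IH show ?case by (auto simp: symdiff_def)
qed

lemma xorl_len: "length b = length b' \<Longrightarrow> length (xorl b b') = length b"
  by (induction b b' rule: xorl.induct) auto

lemma xorl_zero: "length b = length b' \<Longrightarrow> xorl b b' = replicate (length b) False \<Longrightarrow> b = b'"
  by (induction b b' rule: xorl.induct) auto

lemma selsum_zero: "selsum (replicate n False) gs = {}"
proof (induction n arbitrary: gs)
  case 0 then show ?case by simp
next
  case (Suc n) then show ?case by (cases gs) simp_all
qed

lemma popc_append: "popc (xs @ ys) = popc xs + popc ys"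
  by (induction xs) auto

lemma popc_map: "popc (map P [0..<n]) = card {i. i < n \<and> P i}"
proof (induction n)
  case 0 then show ?case by simp
next
  case (Suc n)
  have "{i. i < Suc n \<and> P i} = {i. i < n \<and> P i} \<union> (if P n then {n} else {})"
    by (auto simp: less_Suc_eq)
  moreover have "card ({i. i < n \<and> P i} \<union> (if P n then {n} else {})) = card {i. i < n \<and> P i} + (if P n then 1 else 0)"
    by (auto simp: card_insert_if)
  ultimately show ?case using Suc by (simp add: popc_append)
qed

lemma popc_tob: "S \<subseteq> {..<24} \<Longrightarrow> popc (tob S) = card S"
proof -
  assume "S \<subseteq> {..<24}"
  then have "{i. i < 24 \<and> i \<in> S} = S" by auto
  then show ?thesis by (simp add: tob_def popc_map)
qed

lemma xorl_map: "xorl (map f xs) (map h xs) = map (\<lambda>i. f i \<noteq> h i) xs"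
  by (induction xs) auto

lemma xorl_tob: "xorl (tob a) (tob b) = tob (symdiff a b)"
  by (simp add: tob_def xorl_map symdiff_def) blast

lemma sum_lists_Suc:
  "(\<Sum>b\<in>{b::bool list. length b = Suc n}. F b) = (\<Sum>b\<in>{b. length b = n}. F (False#b)) + (\<Sum>b\<in>{b. length b = n}. F (True#b))"
proof -
  let ?L = "{b::bool list. length b = n}"
  have e: "{b::bool list. length b = Suc n} = Cons False ` ?L \<union> Cons True ` ?L"
    by (auto simp: length_Suc_conv)
  have f: "finite ?L" by (rule finite_list_length)
  have "(\<Sum>b\<in>Cons False ` ?L \<union> Cons True ` ?L. F b) = (\<Sum>b\<in>Cons False ` ?L. F b) + (\<Sum>b\<in>Cons True ` ?L. F b)"
    by (rule sum.union_disjoint) (use f in auto)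
  also have "(\<Sum>b\<in>Cons False ` ?L. F b) = (\<Sum>b\<in>?L. F (False#b))" by (simp add: sum.reindex)
  also have "(\<Sum>b\<in>Cons True ` ?L. F b) = (\<Sum>b\<in>?L. F (True#b))" by (simp add: sum.reindex)
  finally show ?thesis unfolding e .
qed

lemma cnt_sum: "set gs \<subseteq> Pow {..<24} \<Longrightarrow> acc \<subseteq> {..<24} \<Longrightarrow>
  cnt (map tob gs) (tob acc) = (\<Sum>b\<in>{b. length b = length gs}. wfn (card (symdiff acc (selsum b gs))))"
proof (induction gs arbitrary: acc)
  case Nil
  have "{b::bool list. length b = 0} = {[]}" by auto
  then show ?case using Nil by (simp add: popc_tob)
next
  case (Cons g gs)
  have g: "g \<subseteq> {..<24}" using Cons.prems by auto
  have acc': "symdiff g acc \<subseteq> {..<24}" using g Cons.prems by (auto simp: symdiff_def)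
  have "cnt (map tob (g#gs)) (tob acc) = cnt (map tob gs) (tob acc) + cnt (map tob gs) (tob (symdiff g acc))"
    by (simp add: xorl_tob)
  also have "\<dots> = (\<Sum>b\<in>{b. length b = length gs}. wfn (card (symdiff acc (selsum b gs))))
     + (\<Sum>b\<in>{b. length b = length gs}. wfn (card (symdiff (symdiff g acc) (selsum b gs))))"
    using Cons acc' by simp
  also have "\<dots> = (\<Sum>b\<in>{b. length b = length (g#gs)}. wfn (card (symdiff acc (selsum b (g#gs)))))"
  proof -
    have "\<And>S. symdiff (symdiff g acc) S = symdiff acc (symdiff g S)" by (auto simp: symdiff_def)
    then show ?thesis by (simp only: length_Cons sum_lists_Suc) simp
  qed
  finally show ?case .
qed

lemma sum_ind: "finite A \<Longrightarrow> (\<Sum>x\<in>A. if P x then 1 else 0::nat) = card {x\<in>A. P x}"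
proof -
  assume "finite A"
  then have "(\<Sum>x\<in>A. if P x then 1 else 0::nat) = (\<Sum>x\<in>A \<inter> {x. P x}. 1) + (\<Sum>x\<in>A \<inter> - {x. P x}. 0)"
    by (rule sum.If_cases)
  also have "A \<inter> {x. P x} = {x\<in>A. P x}" by auto
  finally show ?thesis by simp
qed

definition BL :: "bool list set" where "BL = {b. length b = 12}"
definition ss :: "bool list \<Rightarrow> nat set" where "ss b = selsum b golay_gens"

lemma card_BL: "card BL = 4096"
proof -
  have "card {xs. set xs \<subseteq> (UNIV::bool set) \<and> length xs = 12} = card (UNIV::bool set) ^ 12"
    by (rule card_lists_length_eq) simp
  then show ?thesis by (simp add: BL_def)
qed

lemma finite_BL: "finite BL" unfolding BL_def by (rule finite_list_length)

lemma ss_sub: "ss b \<subseteq> {..<24}" unfolding ss_def using selsum_sub gens_sub by blast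

lemma arith_aux: "10000 * a + c = (10759::nat) \<Longrightarrow> c \<le> 4096 \<Longrightarrow> a = 1 \<and> c = 759"
proof -
  assume h: "10000 * a + c = (10759::nat)" and le: "c \<le> 4096"
  have a1: "a \<le> 1"
  proof (rule ccontr)
    assume "\<not> a \<le> 1"
    then have "2 \<le> a" by simp
    then have "20000 \<le> 10000 * a" by simp
    with h show False by simp
  qed
  have a0: "a \<noteq> 0"
  proof
    assume "a = 0"
    with h have "c = 10759" by simp
    with le show False by simp
  qed
  from a1 a0 have "a = 1" by simp
  with h show ?thesis by simp
qed

lemma counts: "card {b\<in>BL. card (ss b) < 8} = 1 \<and> card {b\<in>BL. card (ss b) = 8} = 759"
proof -
  have "cnt (map tob golay_gens) (tob {}) = (\<Sum>b\<in>BL. wfn (card (ss b)))"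
    using cnt_sum[of golay_gens "{}"] gens_sub by (auto simp: BL_def ss_def len_gens)
  then have s: "(\<Sum>b\<in>BL. wfn (card (ss b))) = 10759" using cnt_eval by simp
  have "(\<Sum>b\<in>BL. wfn (card (ss b))) = (\<Sum>b\<in>BL. 10000 * (if card (ss b) < 8 then 1 else 0) + (if card (ss b) = 8 then 1 else 0))"
    by (rule sum.cong) (auto simp: wfn_def)
  also have "\<dots> = 10000 * card {b\<in>BL. card (ss b) < 8} + card {b\<in>BL. card (ss b) = 8}"
    by (simp add: sum.distrib sum_distrib_left[symmetric] sum_ind finite_BL)
  finally have e: "10000 * card {b\<in>BL. card (ss b) < 8} + card {b\<in>BL. card (ss b) = 8} = 10759" using s by simp
  have le: "card {b\<in>BL. card (ss b) = 8} \<le> card BL" by (rule card_mono[OF finite_BL]) auto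
  show ?thesis by (rule arith_aux[OF e]) (use le card_BL in simp)
qed

lemma zero_BL: "replicate 12 False \<in> BL" by (simp add: BL_def)

lemma minw: "b \<in> BL \<Longrightarrow> b \<noteq> replicate 12 False \<Longrightarrow> 8 \<le> card (ss b)"
proof (rule ccontr)
  assume b: "b \<in> BL" "b \<noteq> replicate 12 False" "\<not> 8 \<le> card (ss b)"
  have z: "replicate 12 False \<in> {b\<in>BL. card (ss b) < 8}" by (simp add: zero_BL ss_def selsum_zero)
  have "b \<in> {b\<in>BL. card (ss b) < 8}" using b by simp
  moreover have "card {b\<in>BL. card (ss b) < 8} = 1" using counts by simp
  ultimately show False using z b(2) by (metis card_1_singletonE singletonD)
qed

lemma dist8: "b \<in> BL \<Longrightarrow> b' \<in> BL \<Longrightarrow> b \<noteq> b' \<Longrightarrow> 8 \<le> card (symdiff (ss b) (ss b'))"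
proof -
  assume b: "b \<in> BL" "b' \<in> BL" "b \<noteq> b'"
  have l: "length b = 12" "length b' = 12" using b by (auto simp: BL_def)
  have "symdiff (ss b) (ss b') = ss (xorl b b')" using l by (simp add: ss_def selsum_xor len_gens)
  moreover have "xorl b b' \<in> BL" using l by (simp add: BL_def xorl_len)
  moreover have "xorl b b' \<noteq> replicate 12 False" using l b(3) xorl_zero[of b b'] by auto
  ultimately show ?thesis using minw by simp
qed

lemma card_symdiff: "finite X \<Longrightarrow> finite Y \<Longrightarrow> card (symdiff X Y) + 2 * card (X \<inter> Y) = card X + card Y"
proof -
  assume f: "finite X" "finite Y"
  have "symdiff X Y = (X \<union> Y) - (X \<inter> Y)" by (auto simp: symdiff_def)
  then have "card (symdiff X Y) = card (X \<union> Y) - card (X \<inter> Y)"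
    using f by (simp add: card_Diff_subset[of "X \<inter> Y" "X \<union> Y"] Int_Un_eq(3) inf.coboundedI1)
  moreover have "card X + card Y = card (X \<union> Y) + card (X \<inter> Y)" using f by (rule card_Un_Int)
  moreover have "card (X \<inter> Y) \<le> card (X \<union> Y)" using f by (intro card_mono) auto
  ultimately show ?thesis by linarith
qed

lemma steiner_std:
  assumes "T \<subseteq> {..<24}" "card T = 5"
  shows "\<exists>b\<in>BL. card (ss b) = 8 \<and> T \<subseteq> ss b"
proof -
  define Oc where "Oc = {b\<in>BL. card (ss b) = 8}"
  define Fam where "Fam b = {T. T \<subseteq> ss b \<and> card T = 5}" for b
  define All5 where "All5 = {T. T \<subseteq> {..<24::nat} \<and> card T = 5}"
  have fin_ss: "finite (ss b)" for b using ss_sub finite_subset by blast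
  have cOc: "card Oc = 759" using counts by (simp add: Oc_def)
  have fOc: "finite Oc" using finite_BL by (simp add: Oc_def)
  have cF: "card (Fam b) = 56" if "b \<in> Oc" for b
  proof -
    have "card (Fam b) = card (ss b) choose 5" unfolding Fam_def by (rule n_subsets[OF fin_ss])
    then show ?thesis using that choose_8_5 by (simp add: Oc_def)
  qed
  have fF: "finite (Fam b)" for b unfolding Fam_def using fin_ss by auto
  have disj: "Fam b \<inter> Fam b' = {}" if "b \<in> Oc" "b' \<in> Oc" "b \<noteq> b'" for b b'
  proof (rule ccontr)
    assume "Fam b \<inter> Fam b' \<noteq> {}"
    then obtain T' where T': "T' \<subseteq> ss b" "T' \<subseteq> ss b'" "card T' = 5" unfolding Fam_def by auto
    have "card T' \<le> card (ss b \<inter> ss b')" using T' fin_ss by (intro card_mono) auto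
    moreover have "card (symdiff (ss b) (ss b')) + 2 * card (ss b \<inter> ss b') = 16"
      using card_symdiff[OF fin_ss fin_ss, of b b'] that by (simp add: Oc_def)
    moreover have "8 \<le> card (symdiff (ss b) (ss b'))" using dist8 that by (simp add: Oc_def)
    ultimately show False using T'(3) by linarith
  qed
  have "card (\<Union>b\<in>Oc. Fam b) = (\<Sum>b\<in>Oc. card (Fam b))"
    by (rule card_UN_disjoint[OF fOc]) (use fF disj in auto)
  also have "\<dots> = 42504" using cF cOc by simp
  finally have c1: "card (\<Union>b\<in>Oc. Fam b) = 42504" .
  have c2: "card All5 = 42504" unfolding All5_def using n_subsets[of "{..<24::nat}" 5] choose_24_5 by simp
  have sub: "(\<Union>b\<in>Oc. Fam b) \<subseteq> All5" unfolding All5_def Fam_def using ss_sub by blast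
  have fA: "finite All5" unfolding All5_def by auto
  have "(\<Union>b\<in>Oc. Fam b) = All5" by (rule card_subset_eq[OF fA sub]) (simp add: c1 c2)
  moreover have "T \<in> All5" using assms by (simp add: All5_def)
  ultimately show ?thesis unfolding Fam_def Oc_def by blast
qed

lemma golay_facts:
  assumes "golay_copy Gc"
  shows "{} \<in> Gc"
    and "\<And>S. S \<subseteq> Omega \<Longrightarrow> card S = 5 \<Longrightarrow> \<exists>D\<in>Gc. card D = 8 \<and> S \<subseteq> D \<and> D \<subseteq> Omega"
proof -
  obtain \<pi> where pi: "bij_betw \<pi> Omega Omega" "Gc = (\<lambda>D. \<pi> ` D) ` golay_std"
    using assms unfolding golay_copy_def by blast
  show "{} \<in> Gc" using pi(2) empty_in_std by force
  fix S assume S: "S \<subseteq> Omega" "card S = 5"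
  define T where "T = inv_into Omega \<pi> ` S"
  have bi: "bij_betw (inv_into Omega \<pi>) Omega Omega" using pi(1) by (rule bij_betw_inv_into)
  have TO: "T \<subseteq> Omega" unfolding T_def using bi S(1) bij_betw_imp_surj_on by blast
  have "card T = 5" unfolding T_def using S bi
    by (metis bij_betw_def card_image inj_on_subset)
  then obtain b where b: "b \<in> BL" "card (ss b) = 8" "T \<subseteq> ss b"
    using steiner_std[of T] TO by (auto simp: Omega_def)
  define D where "D = \<pi> ` ss b"
  have "ss b \<in> golay_std" using b(1) by (simp add: BL_def ss_def selsum_in_std)
  then have "D \<in> Gc" using pi(2) by (simp add: D_def)
  moreover have "ss b \<subseteq> Omega" using ss_sub by (simp add: Omega_def)
  moreover then have "card D = 8" unfolding D_def using pi(1) b(2)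
    by (metis bij_betw_def card_image inj_on_subset)
  moreover have "S \<subseteq> D"
  proof
    fix s assume "s \<in> S"
    then have "\<pi> (inv_into Omega \<pi> s) = s" using S(1) pi(1) by (metis bij_betw_def f_inv_into_f subsetD)
    moreover have "inv_into Omega \<pi> s \<in> ss b" using \<open>s \<in> S\<close> b(3) T_def by auto
    ultimately show "s \<in> D" unfolding D_def by (metis imageI)
  qed
  moreover have "D \<subseteq> Omega" unfolding D_def using \<open>ss b \<subseteq> Omega\<close> pi(1) bij_betw_imp_surj_on by blast
  ultimately show "\<exists>D\<in>Gc. card D = 8 \<and> S \<subseteq> D \<and> D \<subseteq> Omega" by blast
qed




lemma card2_obtain:
  assumes "card X = 2"
  obtains x y where "X = {x, y}" "x \<noteq> y"
  using assms by (metis card_2_iff)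

lemma exists_B':
  assumes gc: "golay_copy Gc" and h3: "balanced_commuting_four_group Gc A B C"
  shows "\<exists>B'. B' \<in> sextet Gc B \<and> card (A \<inter> B') = 2"
proof -
  note gf = golay_facts[OF gc]
  have AO: "A \<subseteq> Omega" and BO: "B \<subseteq> Omega" and cA: "card A = 4" and cB: "card B = 4"
    and nAB: "symdiff A B \<notin> Gc" and com: "sextets_commute Gc A B"
    using h3 unfolding balanced_commuting_four_group_def by auto
  have fA: "finite A" and fB: "finite B" using AO BO by (auto intro: finite_sub_Omega)
  have Ain: "A \<in> sextet Gc A" using AO cA gf(1) by (simp add: sextet_def)
  have Bin: "B \<in> sextet Gc B" using BO cB gf(1) by (simp add: sextet_def)
  have ev: "even (card (A \<inter> B))" using com Ain Bin unfolding sextets_commute_def by blast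
  have le: "card (A \<inter> B) \<le> 4" using cA fA by (metis Int_lower1 card_mono)
  have n4: "card (A \<inter> B) \<noteq> 4"
  proof
    assume "card (A \<inter> B) = 4"
    then have "A \<inter> B = A" "A \<inter> B = B" using cA cB fA fB
      by (metis Int_lower1 card_subset_eq, metis Int_lower2 card_subset_eq)
    then have "A = B" by simp
    then show False using nAB gf(1) by simp
  qed
  consider "card (A \<inter> B) = 2" | "card (A \<inter> B) = 0"
    using ev le n4 by (metis dvd_refl even_Suc le_SucE nat_le_linear numeral_2_eq_2 numeral_3_eq_3 numeral_Bit0 one_add_one add_2_eq_Suc le_zero_eq odd_one)
  then show ?thesis
  proof cases
    case 1 then show ?thesis using Bin by blast
  next
    case 2
    then have disj: "A \<inter> B = {}" using fA by simp
    obtain a where a: "a \<in> A" using cA by fastforce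
    have aB: "a \<notin> B" using a disj by auto
    have "card (insert a B) = 5" using aB fB cB by simp
    moreover have "insert a B \<subseteq> Omega" using a AO BO by auto
    ultimately obtain D where D: "D \<in> Gc" "card D = 8" "insert a B \<subseteq> D" "D \<subseteq> Omega"
      using gf(2) by blast
    define B' where "B' = D - B"
    have fD: "finite D" using D(4) by (rule finite_sub_Omega)
    have cB': "card B' = 4" unfolding B'_def using D cB fB by (simp add: card_Diff_subset)
    have "symdiff B' B = D" unfolding B'_def using D(3) by (auto simp: symdiff_def)
    then have B'in: "B' \<in> sextet Gc B" using D cB' by (auto simp: sextet_def B'_def)
    have ev': "even (card (A \<inter> B'))" using com Ain B'in unfolding sextets_commute_def by blast
    have aB': "a \<in> A \<inter> B'" using a aB D(3) by (auto simp: B'_def)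
    have fB': "finite B'" using fD by (simp add: B'_def)
    have pos: "card (A \<inter> B') \<noteq> 0" using aB' fA by auto
    have le': "card (A \<inter> B') \<le> 4" using cA fA by (metis Int_lower1 card_mono)
    have n4': "card (A \<inter> B') \<noteq> 4"
    proof
      assume "card (A \<inter> B') = 4"
      then have "A \<inter> B' = A" "A \<inter> B' = B'" using cA cB' fA fB'
        by (metis Int_lower1 card_subset_eq, metis Int_lower2 card_subset_eq)
      then have "A = B'" by simp
      then have "symdiff A B = D" unfolding B'_def using D(3) by (auto simp: symdiff_def)
      then show False using nAB D(1) by simp
    qed
    have "card (A \<inter> B') = 2" using ev' pos le' n4' by presburger
    then show ?thesis using B'in by blast
  qed
qed


lemma octad_enum:
  assumes gc: "golay_copy Gc" and h3: "balanced_commuting_four_group Gc A B C"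
    and B': "B' \<in> sextet Gc B" and c2: "card (A \<inter> B') = 2"
  shows "\<exists>i1 j1 i2 j2 i3 j3 i4 j4. distinct [i1, j1, i2, j2, i3, j3, i4, j4] \<and>
     {i1, j1, i2, j2, i3, j3, i4, j4} \<subseteq> Omega \<and> {i1, j1, i2, j2, i3, j3, i4, j4} \<in> Gc \<and>
     A = {i1, j1, i2, j2} \<and> B' = {i1, j1, i3, j3}"
proof -
  note gf = golay_facts[OF gc]
  have AO: "A \<subseteq> Omega" and cA: "card A = 4" and com: "sextets_commute Gc A B"
    using h3 unfolding balanced_commuting_four_group_def by auto
  have B'O: "B' \<subseteq> Omega" and cB': "card B' = 4" using B' by (auto simp: sextet_def)
  have fA: "finite A" using AO by (rule finite_sub_Omega)
  have fB': "finite B'" using B'O by (rule finite_sub_Omega)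
  have cBA: "card (B' - A) = 2"
  proof -
    have "card B' = card (B' \<inter> A) + card (B' - A)" using fB' by (rule card_Int_Diff)
    then show ?thesis using cB' c2 by (simp add: Int_commute)
  qed
  have cAB: "card (A - B') = 2"
  proof -
    have "card A = card (A \<inter> B') + card (A - B')" using fA by (rule card_Int_Diff)
    then show ?thesis using cA c2 by simp
  qed
  obtain m where m: "m \<in> B' - A" using cBA by (metis card_0_eq ex_in_conv finite_Diff fB' zero_neq_numeral)
  have "card (insert m A) = 5" using m fA cA by simp
  moreover have "insert m A \<subseteq> Omega" using m AO B'O by auto
  ultimately obtain D where D: "D \<in> Gc" "card D = 8" "insert m A \<subseteq> D" "D \<subseteq> Omega"
    using gf(2) by blast
  have fD: "finite D" using D(4) by (rule finite_sub_Omega)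
  define T where "T = D - A"
  have cT: "card T = 4" unfolding T_def using D cA fA by (simp add: card_Diff_subset)
  have "symdiff T A = D" unfolding T_def using D(3) by (auto simp: symdiff_def)
  then have Tin: "T \<in> sextet Gc A" using D cT by (auto simp: sextet_def T_def)
  have ev: "even (card (T \<inter> B'))" using com Tin B' unfolding sextets_commute_def by blast
  have sub: "T \<inter> B' \<subseteq> B' - A" by (auto simp: T_def)
  have mT: "m \<in> T \<inter> B'" using m D(3) by (auto simp: T_def)
  have "card (T \<inter> B') \<le> 2" using sub cBA fB' by (metis card_mono finite_Diff)
  moreover have "card (T \<inter> B') \<noteq> 0" using mT fB' by auto
  ultimately have "card (T \<inter> B') = 2" using ev by presburger
  then have "T \<inter> B' = B' - A" using sub cBA fB' by (metis card_subset_eq finite_Diff)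
  then have B'D: "B' \<subseteq> D" using D(3) by (auto simp: T_def)
  have cU: "card (A \<union> B') = 6"
  proof -
    have "card A + card B' = card (A \<union> B') + card (A \<inter> B')" using fA fB' by (rule card_Un_Int)
    then show ?thesis using cA cB' c2 by simp
  qed
  have cP4: "card (D - (A \<union> B')) = 2"
    using cU D(2) D(3) B'D fA fB' by (simp add: card_Diff_subset)
  obtain i1 j1 where p1: "A \<inter> B' = {i1, j1}" "i1 \<noteq> j1" using c2 by (rule card2_obtain)
  obtain i2 j2 where p2: "A - B' = {i2, j2}" "i2 \<noteq> j2" using cAB by (rule card2_obtain)
  obtain i3 j3 where p3: "B' - A = {i3, j3}" "i3 \<noteq> j3" using cBA by (rule card2_obtain)
  obtain i4 j4 where p4: "D - (A \<union> B') = {i4, j4}" "i4 \<noteq> j4" using cP4 by (rule card2_obtain)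
  have mem: "i1 \<in> A" "i1 \<in> B'" "j1 \<in> A" "j1 \<in> B'" "i2 \<in> A" "i2 \<notin> B'" "j2 \<in> A" "j2 \<notin> B'"
    "i3 \<notin> A" "i3 \<in> B'" "j3 \<notin> A" "j3 \<in> B'" "i4 \<notin> A" "i4 \<notin> B'" "j4 \<notin> A" "j4 \<notin> B'"
    "i4 \<in> D" "j4 \<in> D"
    using p1(1) p2(1) p3(1) p4(1) by blast+
  have dist: "distinct [i1, j1, i2, j2, i3, j3, i4, j4]"
    using mem p1(2) p2(2) p3(2) p4(2) by auto
  have eA: "A = {i1, j1, i2, j2}" using p1(1) p2(1) by blast
  have eB: "B' = {i1, j1, i3, j3}" using p1(1) p3(1) by blast
  have "D = (A \<inter> B') \<union> (A - B') \<union> (B' - A) \<union> (D - (A \<union> B'))" using D(3) B'D by blast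
  then have eD: "D = {i1, j1, i2, j2, i3, j3, i4, j4}" unfolding p1(1) p2(1) p3(1) p4(1) by auto
  show ?thesis
    apply (rule exI[of _ i1], rule exI[of _ j1], rule exI[of _ i2], rule exI[of _ j2])
    apply (rule exI[of _ i3], rule exI[of _ j3], rule exI[of _ i4], rule exI[of _ j4])
    unfolding eD[symmetric] using dist eA eB D(1) D(4) by (intro conjI)
qed


theorem lemma5p17:
  fixes Gc :: "nat set set" and G :: "cl set" and A B C :: "nat set"
    and \<mu> :: "nat set \<Rightarrow> real" and \<sigma> :: real
  assumes "golay_copy Gc"
    and "good_G Gc G"
    and "balanced_commuting_four_group Gc A B C"
    and "\<sigma> \<in> {1, -1}"
    and "cm_eq G (cl_mul (cl_e A) (cl_e B)) (cl_smul \<sigma> (cl_e C))"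
    and "\<forall>X\<in>{{}, A, B, C}. \<mu> X \<in> {1, -1}"
    and "\<mu> {} = 1" and "\<mu> C = \<mu> A * \<mu> B"
  shows "in_spin_orbit G
           (cl_smul (1/2) (cl_add (cl_add (cl_add cl_one (cl_smul (\<mu> A) (cl_e A)))
              (cl_smul (\<mu> B) (cl_e B))) (cl_smul (- \<sigma> * \<mu> C) (cl_e C))))"
proof -
  note gc = assms(1) and gG = assms(2) and h3 = assms(3)
  have AO: "A \<subseteq> Omega" and BO: "B \<subseteq> Omega" and CO: "C \<subseteq> Omega"
    using h3 unfolding balanced_commuting_four_group_def by auto
  obtain B' where B': "B' \<in> sextet Gc B" "card (A \<inter> B') = 2" using exists_B'[OF gc h3] by blast
  have B'O: "B' \<subseteq> Omega" and B'G: "symdiff B' B \<in> Gc" using B'(1) by (auto simp: sextet_def)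
  obtain i1 j1 i2 j2 i3 j3 i4 j4 where oc: "distinct [i1, j1, i2, j2, i3, j3, i4, j4]"
     "{i1, j1, i2, j2, i3, j3, i4, j4} \<subseteq> Omega" "{i1, j1, i2, j2, i3, j3, i4, j4} \<in> Gc"
     "A = {i1, j1, i2, j2}" "B' = {i1, j1, i3, j3}"
    using octad_enum[OF gc h3 B'] by blast
  define E0 where "E0 = symdiff B' B"
  have E0O: "E0 \<subseteq> Omega" unfolding E0_def using B'O BO by (rule symdiff_subI)
  obtain \<delta> where dl: "\<delta> = 1 \<or> \<delta> = -1" "\<And>a. eqv G (a * (\<delta> *\<^sub>R E E0)) a"
    using good_G_delta[OF gG B'G[folded E0_def] E0O] by blast
  define s0 where "s0 = cl_sign B' E0"
  have s0sq: "s0 * s0 = 1" unfolding s0_def by (rule cl_sign_sq)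
  have dsq: "\<delta> * \<delta> = 1" using dl(1) by auto
  define \<tau> where "\<tau> = s0 * \<delta>"
  have "E B' * E E0 = s0 *\<^sub>R E B"
  proof -
    have "symdiff B' E0 = B" unfolding E0_def by simp
    then show ?thesis using B'O E0O by (simp add: E_mul s0_def)
  qed
  then have "E B = (s0 * \<delta>) *\<^sub>R (E B' * (\<delta> *\<^sub>R E E0))"
  proof -
    have sc0: "s0 * \<delta> * \<delta> * s0 = (s0 * s0) * (\<delta> * \<delta>)" by (simp add: mult_ac)
    have sc: "s0 * \<delta> * \<delta> * s0 = 1" unfolding sc0 using s0sq dsq by simp
    show ?thesis using \<open>E B' * E E0 = s0 *\<^sub>R E B\<close> by (simp add: mult.assoc[symmetric] sc)
  qed
  then have eB: "eqv G (E B) (\<tau> *\<^sub>R E B')"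
    unfolding \<tau>_def by (simp only:) (rule eqv_scale, rule dl(2))
  have eAB: "eqv G (E A * E B) (\<tau> *\<^sub>R (E A * E B'))"
    using eqv_lmul[OF eB, of "E A"] by simp
  have h5: "eqv G (E A * E B) (\<sigma> *\<^sub>R E C)"
    using assms(5) AO BO CO by (simp add: cm_eq_eqv[symmetric] times_clt.rep_eq scaleR_clt.rep_eq Rp_E)
  have eC: "eqv G ((- \<sigma> * \<mu> C) *\<^sub>R E C) ((- \<mu> C * \<tau>) *\<^sub>R (E A * E B'))"
  proof -
    have "(- \<sigma> * \<mu> C) *\<^sub>R E C = (- \<mu> C) *\<^sub>R (\<sigma> *\<^sub>R E C)" by (simp add: mult.commute)
    moreover have "eqv G ((- \<mu> C) *\<^sub>R (\<sigma> *\<^sub>R E C)) ((- \<mu> C) *\<^sub>R (E A * E B))"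
      by (rule eqv_scale, rule eqv_sym, rule h5)
    moreover have "eqv G ((- \<mu> C) *\<^sub>R (E A * E B)) ((- \<mu> C) *\<^sub>R (\<tau> *\<^sub>R (E A * E B')))"
      by (rule eqv_scale, rule eAB)
    ultimately show ?thesis by (metis eqv_trans scaleR_scaleR)
  qed
  define t where "t = (1/2::real) *\<^sub>R (1 + \<mu> A *\<^sub>R E A + \<mu> B *\<^sub>R E B + (- \<sigma> * \<mu> C) *\<^sub>R E C)"
  define \<alpha> where "\<alpha> = \<mu> A"
  define \<beta> where "\<beta> = \<mu> B * \<tau>"
  have al: "\<alpha> = 1 \<or> \<alpha> = -1" using assms(6) by (auto simp: \<alpha>_def)
  have tpm: "\<tau> = 1 \<or> \<tau> = -1" unfolding \<tau>_def using cl_sign_pm[of B' E0] dl(1) s0_def by auto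
  have be: "\<beta> = 1 \<or> \<beta> = -1" using assms(6) tpm by (auto simp: \<beta>_def)
  define t' where "t' = (1/2::real) *\<^sub>R (1 + \<alpha> *\<^sub>R E A + \<beta> *\<^sub>R E B' - (\<alpha>*\<beta>) *\<^sub>R (E A * E B'))"
  have "eqv G t t'"
  proof -
    have "eqv G (1 + \<mu> A *\<^sub>R E A + \<mu> B *\<^sub>R E B + (- \<sigma> * \<mu> C) *\<^sub>R E C)
                (1 + \<mu> A *\<^sub>R E A + \<mu> B *\<^sub>R (\<tau> *\<^sub>R E B') + (- \<mu> C * \<tau>) *\<^sub>R (E A * E B'))"
      by (intro eqv_add eqv_refl eqv_scale eB eC)
    moreover have "1 + \<mu> A *\<^sub>R E A + \<mu> B *\<^sub>R (\<tau> *\<^sub>R E B') + (- \<mu> C * \<tau>) *\<^sub>R (E A * E B')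
       = 1 + \<alpha> *\<^sub>R E A + \<beta> *\<^sub>R E B' - (\<alpha>*\<beta>) *\<^sub>R (E A * E B')"
      by (simp add: \<alpha>_def \<beta>_def assms(8) mult_ac)
    ultimately show ?thesis unfolding t_def t'_def by (metis eqv_scale)
  qed
  obtain g where g: "g \<in> Spin" "eqv G (Ab g) t'"
    using orbit[OF gG oc(1) oc(2) oc(3) al be] unfolding t'_def oc(4) oc(5) by blast
  have gc': "g \<in> cl_carrier" using g(1) by (rule Spin_carrier)
  have "eqv G (Ab g) t" using g(2) \<open>eqv G t t'\<close> by (metis eqv_sym eqv_trans)
  then have "cm_eq G g (Rp t)" using gc' by (simp add: cm_eq_eqv[symmetric] Ab_inverse)
  moreover have "cl_mul g cl_one = g" using gc' by (rule cl_mul_one)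
  moreover have "Rp t = cl_smul (1/2) (cl_add (cl_add (cl_add cl_one (cl_smul (\<mu> A) (cl_e A)))
              (cl_smul (\<mu> B) (cl_e B))) (cl_smul (- \<sigma> * \<mu> C) (cl_e C)))"
    unfolding t_def by (simp only: scaleR_clt.rep_eq plus_clt.rep_eq one_clt.rep_eq Rp_E[OF AO] Rp_E[OF BO] Rp_E[OF CO])
  ultimately show ?thesis unfolding in_spin_orbit_def using g(1) by metis
qed


end
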